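(* Let $\mathcal M=(M,<,+,0,\ldots)$ be a definably complete locally o-minimal expansion of an ordered group. Let $(G,\tau_G)$ be a definable topological group and $H$ a definable normal subgroup of $G$, with $\tau_H$ the relative topology on $H$. If both the definable topological space $(H,\tau_H)$ and the definable quotient group $(G/H,\tau_Q)$ are definably compact, then $(G,\tau_G)$ is definably compact.
   Context: "Definable" means definable in $\mathcal M$ with parameters. $\mathcal M$ is an expansion of an ordered group with dense order without endpoints; locally o-minimal: for every definable $X\subseteq M$ and $a\in M$ there is an open interval $I\ni a$ with $X\cap I$ a finite union of points and open intervals; definably complete: every definable subset of $M$ has sup and inf in $M\cup\{\pm\infty\}$. A family $\{S_t:t\in T\}$ is definable if $\bigcup_t \{t\}\times S_t$ and $T$ are definable. A definable topological space is a definable set with a topology having a definable family as open base; it is definably compact if every definable filtered family (for any two members there is a member contained in their intersection) of nonempty closed subsets has nonempty intersection. A definable topological group is a definable group with a definable topology making multiplication and inversion continuous. For a definable continuous action of $H$ on $G$ (here by left multiplication), the definable quotient is a definable topological space $(Q,\tau_Q)$ with a definable continuous map $\pi:G\to Q$ such that every definable continuous map $\varphi$ from $G$ to a definable topological space which is constant on $H$-orbits factors uniquely as $\varphi=\psi\circ\pi$ with $\psi$ definable continuous; it exists and is unique up to definable homeomorphism (concretely: $Q$ a definable set meeting each coset $Hg$ in exactly one point, $\pi$ sending $g$ to that point, and $S\subseteq Q$ open iff $\pi^{-1}(S)$ open). When $H$ is normal, $Q=G/H$ is a definable topological group with multiplication $g_1H\cdot g_2H=g_1g_2H$, called the definable quotient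 group. *)

theory Defs
  imports "HOL-Analysis.Analysis" "HOL-Algebra.Coset"
begin

text \<open>Points of M^n are lists of length n. A structure is given by D, where D n is the
collection of definable (with parameters) subsets of M^n.\<close>

definition Mn :: "nat \<Rightarrow> 'a list set" where
  "Mn n = {xs. length xs = n}"

definition structure_on :: "(nat \<Rightarrow> 'a list set set) \<Rightarrow> bool" where
  "structure_on D \<longleftrightarrow>
     (\<forall>n S. S \<in> D n \<longrightarrow> S \<subseteq> Mn n) \<and>
     (\<forall>n. Mn n \<in> D n) \<and>
     (\<forall>n S T. S \<in> D n \<and> T \<in> D n \<longrightarrow> S \<union> T \<in> D n) \<and>
     (\<forall>n S. S \<in> D n \<longrightarrow> Mn n - S \<in> D n) \<and>
     (\<forall>n m S T. S \<in> D n \<and> T \<in> D m \<longrightarrow> {xs @ ys | xs ys. xs \<in> S \<and> ys \<in> T} \<in> D (n + m)) \<and>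
     (\<forall>n i j. i < n \<and> j < n \<longrightarrow> {xs \<in> Mn n. xs ! i = xs ! j} \<in> D n) \<and>
     (\<forall>n S. S \<in> D (Suc n) \<longrightarrow> take n ` S \<in> D n)"

text \<open>D is an expansion of the ordered group (M,<,+,0), with all parameters allowed.\<close>
definition expands_ordered_group :: "(nat \<Rightarrow> ('a::linordered_ab_group_add) list set set) \<Rightarrow> bool" where
  "expands_ordered_group D \<longleftrightarrow>
     structure_on D \<and>
     (\<forall>a. {[a]} \<in> D 1) \<and>
     {[x, y] | x y. x < y} \<in> D 2 \<and>
     {[x, y, z] | x y z. x + y = z} \<in> D 3"

definition set1 :: "'a list set \<Rightarrow> 'a set" where
  "set1 X = {x. [x] \<in> X}"

definition finite_union_points_intervals :: "('a::linorder) set \<Rightarrow> bool" where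
  "finite_union_points_intervals A \<longleftrightarrow>
     (\<exists>P J. finite P \<and> finite J \<and> A = P \<union> (\<Union>(c, d)\<in>J. {c<..<d}))"

definition locally_o_minimal :: "(nat \<Rightarrow> ('a::linorder) list set set) \<Rightarrow> bool" where
  "locally_o_minimal D \<longleftrightarrow>
     (\<forall>X a. X \<in> D 1 \<longrightarrow>
        (\<exists>l u. l < a \<and> a < u \<and> finite_union_points_intervals (set1 X \<inter> {l<..<u})))"

definition definably_complete :: "(nat \<Rightarrow> ('a::linorder) list set set) \<Rightarrow> bool" where
  "definably_complete D \<longleftrightarrow>
     (\<forall>X. X \<in> D 1 \<longrightarrow>
        ((set1 X \<noteq> {} \<and> (\<exists>b. \<forall>x\<in>set1 X. x \<le> b)) \<longrightarrow>
            (\<exists>s. (\<forall>x\<in>set1 X. x \<le> s) \<and> (\<forall>b. (\<forall>x\<in>set1 X. x \<le> b) \<longrightarrow> s \<le> b))) \<and>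
        ((set1 X \<noteq> {} \<and> (\<exists>b. \<forall>x\<in>set1 X. b \<le> x)) \<longrightarrow>
            (\<exists>s. (\<forall>x\<in>set1 X. s \<le> x) \<and> (\<forall>b. (\<forall>x\<in>set1 X. b \<le> x) \<longrightarrow> b \<le> s))))"

definition dc_lomin_expansion :: "(nat \<Rightarrow> ('a::linordered_ab_group_add) list set set) \<Rightarrow> bool" where
  "dc_lomin_expansion D \<longleftrightarrow>
     expands_ordered_group D \<and>
     (\<forall>x y::'a. x < y \<longrightarrow> (\<exists>z. x < z \<and> z < y)) \<and>
     (\<forall>x::'a. (\<exists>y. y < x) \<and> (\<exists>y. x < y)) \<and>
     locally_o_minimal D \<and> definably_complete D"

definition def_family :: "(nat \<Rightarrow> 'a list set set) \<Rightarrow> nat \<Rightarrow> nat \<Rightarrow> 'a list set \<Rightarrow> ('a list \<Rightarrow> 'a list set) \<Rightarrow> bool" where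
  "def_family D m n T S \<longleftrightarrow>
     T \<in> D m \<and> (\<forall>t\<in>T. S t \<subseteq> Mn n) \<and> {t @ x | t x. t \<in> T \<and> x \<in> S t} \<in> D (m + n)"

definition def_map :: "(nat \<Rightarrow> 'a list set set) \<Rightarrow> nat \<Rightarrow> nat \<Rightarrow> 'a list set \<Rightarrow> ('a list \<Rightarrow> 'a list) \<Rightarrow> bool" where
  "def_map D n m X f \<longleftrightarrow> (\<forall>x\<in>X. f x \<in> Mn m) \<and> {x @ f x | x. x \<in> X} \<in> D (n + m)"

definition def_top_space :: "(nat \<Rightarrow> 'a list set set) \<Rightarrow> nat \<Rightarrow> 'a list topology \<Rightarrow> bool" where
  "def_top_space D n \<tau> \<longleftrightarrow>
     topspace \<tau> \<in> D n \<and>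
     (\<exists>m T B. def_family D m n T B \<and> (\<forall>t\<in>T. openin \<tau> (B t)) \<and>
        (\<forall>U. openin \<tau> U \<longrightarrow> (\<forall>x\<in>U. \<exists>t\<in>T. x \<in> B t \<and> B t \<subseteq> U)))"

definition def_cont_map :: "(nat \<Rightarrow> 'a list set set) \<Rightarrow> nat \<Rightarrow> nat \<Rightarrow> 'a list topology \<Rightarrow> 'a list topology \<Rightarrow> ('a list \<Rightarrow> 'a list) \<Rightarrow> bool" where
  "def_cont_map D n m \<tau>X \<tau>Y f \<longleftrightarrow> continuous_map \<tau>X \<tau>Y f \<and> def_map D n m (topspace \<tau>X) f"

definition def_compact :: "(nat \<Rightarrow> 'a list set set) \<Rightarrow> nat \<Rightarrow> 'a list topology \<Rightarrow> bool" where
  "def_compact D n \<tau> \<longleftrightarrow>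
     (\<forall>m T C. def_family D m n T C \<and> T \<noteq> {} \<and>
        (\<forall>t\<in>T. closedin \<tau> (C t) \<and> C t \<noteq> {}) \<and>
        (\<forall>s\<in>T. \<forall>t\<in>T. \<exists>u\<in>T. C u \<subseteq> C s \<inter> C t)
        \<longrightarrow> (\<Inter>t\<in>T. C t) \<noteq> {})"

definition def_top_group :: "(nat \<Rightarrow> 'a list set set) \<Rightarrow> nat \<Rightarrow> 'a list monoid \<Rightarrow> 'a list topology \<Rightarrow> bool" where
  "def_top_group D n G \<tau> \<longleftrightarrow>
     group G \<and> topspace \<tau> = carrier G \<and> def_top_space D n \<tau> \<and>
     {x @ y @ (x \<otimes>\<^bsub>G\<^esub> y) | x y. x \<in> carrier G \<and> y \<in> carrier G} \<in> D (n + n + n) \<and>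
     {x @ inv\<^bsub>G\<^esub> x | x. x \<in> carrier G} \<in> D (n + n) \<and>
     continuous_map (prod_topology \<tau> \<tau>) \<tau> (\<lambda>(x, y). x \<otimes>\<^bsub>G\<^esub> y) \<and>
     continuous_map \<tau> \<tau> (\<lambda>x. inv\<^bsub>G\<^esub> x)"

definition is_def_quotient :: "(nat \<Rightarrow> 'a list set set) \<Rightarrow> nat \<Rightarrow> 'a list monoid \<Rightarrow> 'a list topology \<Rightarrow> 'a list set
     \<Rightarrow> nat \<Rightarrow> 'a list topology \<Rightarrow> ('a list \<Rightarrow> 'a list) \<Rightarrow> bool" where
  "is_def_quotient D n G \<tau> H k \<tau>Q \<pi> \<longleftrightarrow>
     def_top_space D k \<tau>Q \<and> def_cont_map D n k \<tau> \<tau>Q \<pi> \<and>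
     (\<forall>g\<in>carrier G. \<forall>h\<in>H. \<pi> (h \<otimes>\<^bsub>G\<^esub> g) = \<pi> g) \<and>
     (\<forall>m \<tau>Y \<phi>. def_top_space D m \<tau>Y \<and> def_cont_map D n m \<tau> \<tau>Y \<phi> \<and>
         (\<forall>g\<in>carrier G. \<forall>h\<in>H. \<phi> (h \<otimes>\<^bsub>G\<^esub> g) = \<phi> g) \<longrightarrow>
        (\<exists>\<psi>. def_cont_map D k m \<tau>Q \<tau>Y \<psi> \<and> (\<forall>g\<in>carrier G. \<phi> g = \<psi> (\<pi> g))) \<and>
        (\<forall>\<psi>1 \<psi>2. def_cont_map D k m \<tau>Q \<tau>Y \<psi>1 \<and> (\<forall>g\<in>carrier G. \<phi> g = \<psi>1 (\<pi> g)) \<and>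
                  def_cont_map D k m \<tau>Q \<tau>Y \<psi>2 \<and> (\<forall>g\<in>carrier G. \<phi> g = \<psi>2 (\<pi> g)) \<longrightarrow>
                  (\<forall>q\<in>topspace \<tau>Q. \<psi>1 q = \<psi>2 q)))"

end

theory Submission
  imports Defs
begin


definition defbl :: "(nat \<Rightarrow> 'a list set set) \<Rightarrow> nat \<Rightarrow> ('a list \<Rightarrow> bool) \<Rightarrow> bool" where
  "defbl D N P \<longleftrightarrow> {xs \<in> Mn N. P xs} \<in> D N"

lemma Mn_iff[simp]: "xs \<in> Mn n \<longleftrightarrow> length xs = n" by (simp add: Mn_def)

context fixes D :: "nat \<Rightarrow> 'a list set set" assumes SD: "structure_on D"
begin

lemma st1: "S \<in> D n \<Longrightarrow> S \<subseteq> Mn n" using SD unfolding structure_on_def by (elim conjE) (erule allE, erule allE, erule mp)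
lemma st2: "Mn n \<in> D n" using SD unfolding structure_on_def by (elim conjE) (erule allE)
lemma st3: "S \<in> D n \<Longrightarrow> T \<in> D n \<Longrightarrow> S \<union> T \<in> D n" using SD unfolding structure_on_def by (elim conjE) (erule allE, erule allE, erule allE, erule mp, rule conjI)
lemma st4: "S \<in> D n \<Longrightarrow> Mn n - S \<in> D n" using SD unfolding structure_on_def by (elim conjE) (erule allE, erule allE, erule mp)
lemma st5: "S \<in> D n \<Longrightarrow> T \<in> D m \<Longrightarrow> {xs @ ys | xs ys. xs \<in> S \<and> ys \<in> T} \<in> D (n + m)"
  using SD unfolding structure_on_def by (elim conjE) (erule allE, erule allE, erule allE, erule allE, erule mp, rule conjI)
lemma st6: "i < n \<Longrightarrow> j < n \<Longrightarrow> {xs \<in> Mn n. xs ! i = xs ! j} \<in> D n"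
  using SD unfolding structure_on_def by (elim conjE) (erule allE, erule allE, erule allE, erule mp, rule conjI)
lemma st7: "S \<in> D (Suc n) \<Longrightarrow> take n ` S \<in> D n" using SD unfolding structure_on_def by (elim conjE) (erule allE, erule allE, erule mp)

lemma sub: "S \<in> D n \<Longrightarrow> S \<subseteq> Mn n" by (rule st1)

lemma memlen: "S \<in> D n \<Longrightarrow> x \<in> S \<Longrightarrow> length x = n" using sub by fastforce

lemma defbl_mem: "S \<in> D N \<Longrightarrow> defbl D N (\<lambda>xs. xs \<in> S)"
proof -
  assume a: "S \<in> D N"
  then have "{xs \<in> Mn N. xs \<in> S} = S" using sub by blast
  then show ?thesis using a by (simp add: defbl_def)
qed

lemma defbl_D: "defbl D N P \<Longrightarrow> {xs. length xs = N \<and> P xs} \<in> D N"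
  by (simp add: defbl_def Mn_def)

lemma Mn_D: "Mn N \<in> D N" by (rule st2)

lemma defbl_True: "defbl D N (\<lambda>_. True)"
  using Mn_D[of N] unfolding defbl_def by (simp add: Mn_def)

lemma defbl_not: "defbl D N P \<Longrightarrow> defbl D N (\<lambda>xs. \<not> P xs)"
proof -
  assume "defbl D N P"
  then have "Mn N - {xs \<in> Mn N. P xs} \<in> D N" unfolding defbl_def by (rule st4)
  moreover have "Mn N - {xs \<in> Mn N. P xs} = {xs \<in> Mn N. \<not> P xs}" by blast
  ultimately show ?thesis by (simp add: defbl_def)
qed

lemma defbl_or: "defbl D N P \<Longrightarrow> defbl D N Q \<Longrightarrow> defbl D N (\<lambda>xs. P xs \<or> Q xs)"
proof -
  assume "defbl D N P" "defbl D N Q"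
  then have "{xs \<in> Mn N. P xs} \<union> {xs \<in> Mn N. Q xs} \<in> D N" unfolding defbl_def by (rule st3)
  moreover have "{xs \<in> Mn N. P xs} \<union> {xs \<in> Mn N. Q xs} = {xs \<in> Mn N. P xs \<or> Q xs}" by blast
  ultimately show ?thesis by (simp add: defbl_def)
qed

lemma defbl_and: "defbl D N P \<Longrightarrow> defbl D N Q \<Longrightarrow> defbl D N (\<lambda>xs. P xs \<and> Q xs)"
proof -
  assume "defbl D N P" "defbl D N Q"
  then have "defbl D N (\<lambda>xs. \<not> (\<not> P xs \<or> \<not> Q xs))" by (intro defbl_not defbl_or) 
  then show ?thesis by simp
qed

lemma defbl_imp: "defbl D N P \<Longrightarrow> defbl D N Q \<Longrightarrow> defbl D N (\<lambda>xs. P xs \<longrightarrow> Q xs)"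
  using defbl_or[OF defbl_not] by simp

lemma defbl_cong: "defbl D N P \<Longrightarrow> (\<And>xs. length xs = N \<Longrightarrow> P xs = Q xs) \<Longrightarrow> defbl D N Q"
proof -
  assume "defbl D N P" "\<And>xs. length xs = N \<Longrightarrow> P xs = Q xs"
  moreover have "{xs \<in> Mn N. P xs} = {xs \<in> Mn N. Q xs}" using calculation(2) by auto
  ultimately show ?thesis by (simp add: defbl_def)
qed

lemma take_D: "S \<in> D (n + m) \<Longrightarrow> take n ` S \<in> D n"
proof (induction m arbitrary: S)
  case 0 then show ?case
  proof -
    have "take n ` S = S" using memlen[OF 0(1)[simplified]] by (force simp: image_iff)
    then show ?thesis using 0 by simp
  qed
next
  case (Suc m)
  then have "take (n + m) ` S \<in> D (n + m)" by (intro st7) simp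
  then have "take n ` take (n + m) ` S \<in> D n" using Suc.IH by blast
  moreover have "take n ` take (n + m) ` S = take n ` S" by (force simp: image_iff min_def)
  ultimately show ?case by simp
qed

lemma defbl_ex: "defbl D (N + m) P \<Longrightarrow> defbl D N (\<lambda>xs. \<exists>ys. length ys = m \<and> P (xs @ ys))"
proof -
  assume "defbl D (N + m) P"
  then have "take N ` {zs \<in> Mn (N + m). P zs} \<in> D N" unfolding defbl_def by (rule take_D)
  moreover have "take N ` {zs \<in> Mn (N + m). P zs} = {xs \<in> Mn N. \<exists>ys. length ys = m \<and> P (xs @ ys)}"
  proof (intro Set.set_eqI iffI)
    fix xs assume "xs \<in> take N ` {zs \<in> Mn (N + m). P zs}"
    then obtain zs where "length zs = N + m" "P zs" "xs = take N zs" by auto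
    then show "xs \<in> {xs \<in> Mn N. \<exists>ys. length ys = m \<and> P (xs @ ys)}"
      by (auto intro!: exI[of _ "drop N zs"])
  next
    fix xs assume "xs \<in> {xs \<in> Mn N. \<exists>ys. length ys = m \<and> P (xs @ ys)}"
    then obtain ys where "length xs = N" "length ys = m" "P (xs @ ys)" by auto
    then show "xs \<in> take N ` {zs \<in> Mn (N + m). P zs}" by (simp add: image_iff) (metis append_eq_conv_conj length_append)
  qed
  ultimately show ?thesis by (simp add: defbl_def)
qed

lemma defbl_all: "defbl D (N + m) P \<Longrightarrow> defbl D N (\<lambda>xs. \<forall>ys. length ys = m \<longrightarrow> P (xs @ ys))"
proof -
  assume "defbl D (N + m) P"
  then have "defbl D N (\<lambda>xs. \<not> (\<exists>ys. length ys = m \<and> \<not> P (xs @ ys)))"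
    by (intro defbl_not defbl_ex defbl_not)
  then show ?thesis by simp
qed

lemma defbl_eqc: "i < N \<Longrightarrow> j < N \<Longrightarrow> defbl D N (\<lambda>xs. xs ! i = xs ! j)"
  unfolding defbl_def by (rule st6)

lemma prod_D: "S \<in> D n \<Longrightarrow> T \<in> D m \<Longrightarrow> {xs @ ys | xs ys. xs \<in> S \<and> ys \<in> T} \<in> D (n + m)"
  by (rule st5)

lemma defbl_reindex:
  assumes S: "S \<in> D m" and len: "length idx = m" and lt: "\<forall>i\<in>set idx. i < N"
  shows "defbl D N (\<lambda>xs. map ((!) xs) idx \<in> S)"
proof -
  have MN: "Mn N \<in> D N" by (rule st2)
  have P: "defbl D (N + m) (\<lambda>zs. zs \<in> {xs @ ys | xs ys. xs \<in> Mn N \<and> ys \<in> S})"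
    by (rule defbl_mem, rule prod_D[OF MN S])
  have E: "defbl D (N + m) (\<lambda>zs. \<forall>j<j'. zs ! (idx ! j) = zs ! (N + j))" if "j' \<le> m" for j'
    using that
  proof (induction j')
    case 0 then show ?case using defbl_True by simp
  next
    case (Suc j')
    have "idx ! j' < N" using lt len Suc.prems by auto
    then have "defbl D (N + m) (\<lambda>zs. zs ! (idx ! j') = zs ! (N + j'))"
      using Suc.prems by (intro defbl_eqc) auto
    then have "defbl D (N + m) (\<lambda>zs. (\<forall>j<j'. zs ! (idx ! j) = zs ! (N + j)) \<and> zs ! (idx ! j') = zs ! (N + j'))"
      using Suc by (intro defbl_and) auto
    then show ?case by (rule defbl_cong) (auto simp: less_Suc_eq)
  qed
  have "defbl D N (\<lambda>xs. \<exists>ys. length ys = m \<and> (xs @ ys \<in> {xs @ ys | xs ys. xs \<in> Mn N \<and> ys \<in> S}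
          \<and> (\<forall>j<m. (xs @ ys) ! (idx ! j) = (xs @ ys) ! (N + j))))"
    by (intro defbl_ex defbl_and P E) simp
  then show ?thesis
  proof (rule defbl_cong)
    fix xs :: "'a list" assume lx: "length xs = N"
    have idxN: "j < m \<Longrightarrow> idx ! j < N" for j using lt len by auto
    show "(\<exists>ys. length ys = m \<and> xs @ ys \<in> {xs @ ys |xs ys. xs \<in> Mn N \<and> ys \<in> S} \<and>
            (\<forall>j<m. (xs @ ys) ! (idx ! j) = (xs @ ys) ! (N + j))) = (map ((!) xs) idx \<in> S)"
    proof
      assume "\<exists>ys. length ys = m \<and> xs @ ys \<in> {xs @ ys |xs ys. xs \<in> Mn N \<and> ys \<in> S} \<and>
            (\<forall>j<m. (xs @ ys) ! (idx ! j) = (xs @ ys) ! (N + j))"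
      then obtain ys where ly: "length ys = m" and m1: "xs @ ys \<in> {xs @ ys |xs ys. xs \<in> Mn N \<and> ys \<in> S}"
        and eq: "\<forall>j<m. (xs @ ys) ! (idx ! j) = (xs @ ys) ! (N + j)" by blast
      from m1 obtain a b where "xs @ ys = a @ b" "length a = N" "b \<in> S" by auto
      then have "ys \<in> S" using lx by (simp add: append_eq_append_conv)
      moreover have "ys = map ((!) xs) idx"
        using eq ly len lx idxN by (intro nth_equalityI) (auto simp: nth_append)
      ultimately show "map ((!) xs) idx \<in> S" by simp
    next
      assume a: "map ((!) xs) idx \<in> S"
      show "\<exists>ys. length ys = m \<and> xs @ ys \<in> {xs @ ys |xs ys. xs \<in> Mn N \<and> ys \<in> S} \<and>
            (\<forall>j<m. (xs @ ys) ! (idx ! j) = (xs @ ys) ! (N + j))"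
        using a lx len idxN by (intro exI[of _ "map ((!) xs) idx"]) (auto simp: nth_append)
    qed
  qed
qed

lemma map_nth_upt: "i + l \<le> length xs \<Longrightarrow> map ((!) xs) [i..<i+l] = take l (drop i xs)"
  by (rule nth_equalityI) auto

lemma defbl_blk:
  assumes S: "S \<in> D m" and len: "length idx = m" and lt: "\<forall>i\<in>set idx. i < N"
    and f: "\<And>xs. length xs = N \<Longrightarrow> map ((!) xs) idx = f xs"
  shows "defbl D N (\<lambda>xs. f xs \<in> S)"
  using defbl_reindex[OF S len lt] by (rule defbl_cong) (simp add: f)

lemma const_D:
  assumes c1: "\<forall>a. {[a]} \<in> D 1"
  shows "{c} \<in> D (length c)"
proof (induction c)
  case Nil
  have "Mn 0 = {[]}" by (auto simp: Mn_def)
  then show ?case using st2[of 0] by (metis list.size(3))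
next
  case (Cons a c)
  have "{xs @ ys | xs ys. xs \<in> {[a]} \<and> ys \<in> {c}} \<in> D (1 + length c)" using prod_D c1 Cons by blast
  moreover have "{xs @ ys | xs ys. xs \<in> {[a]} \<and> ys \<in> {c}} = {a # c}" by auto
  ultimately show ?case by simp
qed

end


definition fam :: "'a list set \<Rightarrow> ('a list \<Rightarrow> 'a list set) \<Rightarrow> 'a list set" where
  "fam T S = {t @ x | t x. t \<in> T \<and> x \<in> S t}"

locale S5 =
  fixes D :: "nat \<Rightarrow> ('a::linordered_ab_group_add) list set set"
    and G :: "'a list monoid" and \<tau> :: "'a list topology" and H :: "'a list set"
    and \<tau>Q :: "'a list topology" and \<pi> :: "'a list \<Rightarrow> 'a list" and n k :: nat
    and mB :: nat and TB :: "'a list set" and B :: "'a list \<Rightarrow> 'a list set" and e :: 'a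
  assumes dc: "dc_lomin_expansion D"
    and tg: "def_top_group D n G \<tau>"
    and nH: "normal H G" and HD: "H \<in> D n"
    and qu: "is_def_quotient D n G \<tau> H k \<tau>Q \<pi>"
    and cH: "def_compact D n (subtopology \<tau> H)"
    and cQ: "def_compact D k \<tau>Q"
    and Bfam: "def_family D mB n TB B"
    and Bopen: "\<forall>t\<in>TB. openin \<tau> (B t)"
    and Bbase: "\<forall>U. openin \<tau> U \<longrightarrow> (\<forall>x\<in>U. \<exists>t\<in>TB. x \<in> B t \<and> B t \<subseteq> U)"
    and e0: "e \<noteq> 0"
begin

abbreviation "GG \<equiv> carrier G"
abbreviation "Q \<equiv> topspace \<tau>Q"
definition "Mult = {x @ y @ (x \<otimes>\<^bsub>G\<^esub> y) | x y. x \<in> GG \<and> y \<in> GG}"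
definition "PG = {x @ \<pi> x | x. x \<in> topspace \<tau>}"
abbreviation "p0 \<equiv> [0::'a]"
abbreviation "p1 \<equiv> [e]"

lemma SD: "structure_on D" using dc unfolding dc_lomin_expansion_def expands_ordered_group_def by blast
lemma c1: "\<forall>a. {[a]} \<in> D 1" using dc unfolding dc_lomin_expansion_def expands_ordered_group_def by blast
lemma grp: "group G" using tg unfolding def_top_group_def by blast
lemma topG: "topspace \<tau> = GG" using tg unfolding def_top_group_def by blast
lemma GD: "GG \<in> D n" using tg topG unfolding def_top_group_def def_top_space_def by metis
lemma MultD: "Mult \<in> D (n + n + n)" using tg unfolding def_top_group_def Mult_def by blast
lemma mult_cont: "continuous_map (prod_topology \<tau> \<tau>) \<tau> (\<lambda>(x, y). x \<otimes>\<^bsub>G\<^esub> y)" using tg unfolding def_top_group_def by blast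
lemma inv_cont: "continuous_map \<tau> \<tau> (\<lambda>x. inv\<^bsub>G\<^esub> x)" using tg unfolding def_top_group_def by blast
lemma HG: "H \<subseteq> GG" using nH unfolding normal_def subgroup_def by blast
lemma Hsub: "subgroup H G" using nH unfolding normal_def by blast
lemma QS: "def_top_space D k \<tau>Q" using qu unfolding is_def_quotient_def by blast
lemma QD: "Q \<in> D k" using QS unfolding def_top_space_def by blast
lemma pi_cont: "continuous_map \<tau> \<tau>Q \<pi>" using qu unfolding is_def_quotient_def def_cont_map_def by blast
lemma pi_map: "def_map D n k (topspace \<tau>) \<pi>" using qu unfolding is_def_quotient_def def_cont_map_def by blast
lemma PGD: "PG \<in> D (n + k)" using pi_map unfolding def_map_def PG_def by blast
lemma pi_orb: "\<forall>g\<in>GG. \<forall>h\<in>H. \<pi> (h \<otimes>\<^bsub>G\<^esub> g) = \<pi> g" using qu unfolding is_def_quotient_def by blast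
lemma univ: "def_top_space D m \<tau>Y \<Longrightarrow> def_cont_map D n m \<tau> \<tau>Y \<phi> \<Longrightarrow>
         (\<forall>g\<in>GG. \<forall>h\<in>H. \<phi> (h \<otimes>\<^bsub>G\<^esub> g) = \<phi> g) \<Longrightarrow>
        (\<exists>\<psi>. def_cont_map D k m \<tau>Q \<tau>Y \<psi> \<and> (\<forall>g\<in>GG. \<phi> g = \<psi> (\<pi> g))) \<and>
        (\<forall>\<psi>1 \<psi>2. def_cont_map D k m \<tau>Q \<tau>Y \<psi>1 \<and> (\<forall>g\<in>GG. \<phi> g = \<psi>1 (\<pi> g)) \<and>
                  def_cont_map D k m \<tau>Q \<tau>Y \<psi>2 \<and> (\<forall>g\<in>GG. \<phi> g = \<psi>2 (\<pi> g)) \<longrightarrow>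
                  (\<forall>q\<in>Q. \<psi>1 q = \<psi>2 q))"
  using qu unfolding is_def_quotient_def by blast

lemma pi_Q: "g \<in> GG \<Longrightarrow> \<pi> g \<in> Q" using pi_cont topG unfolding continuous_map_def by blast

lemma lenG: "g \<in> GG \<Longrightarrow> length g = n" using memlen[OF SD GD] by blast
lemma lenQ: "q \<in> Q \<Longrightarrow> length q = k" using memlen[OF SD QD] by blast
lemma TBD: "TB \<in> D mB" using Bfam unfolding def_family_def by blast
lemma lenTB: "t \<in> TB \<Longrightarrow> length t = mB" using memlen[OF SD TBD] by blast

lemma mult_mem: "length x = n \<Longrightarrow> length y = n \<Longrightarrow> x @ y @ z \<in> Mult \<longleftrightarrow> x \<in> GG \<and> y \<in> GG \<and> z = x \<otimes>\<^bsub>G\<^esub> y"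
proof
  assume l: "length x = n" "length y = n" and "x @ y @ z \<in> Mult"
  then have "x @ y @ z \<in> {x @ y @ (x \<otimes>\<^bsub>G\<^esub> y) | x y. x \<in> GG \<and> y \<in> GG}" by (simp only: Mult_def)
  then obtain a b where ab: "x @ y @ z = a @ b @ (a \<otimes>\<^bsub>G\<^esub> b)" "a \<in> GG" "b \<in> GG" by blast
  then have "x = a" "y @ z = b @ (a \<otimes>\<^bsub>G\<^esub> b)" using l lenG by (auto simp: append_eq_append_conv)
  then show "x \<in> GG \<and> y \<in> GG \<and> z = x \<otimes>\<^bsub>G\<^esub> y" using ab l lenG by (auto simp: append_eq_append_conv)
qed (auto simp: Mult_def)

lemma pg_mem: "length x = n \<Longrightarrow> x @ q \<in> PG \<longleftrightarrow> x \<in> GG \<and> q = \<pi> x"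
proof
  assume l: "length x = n" and "x @ q \<in> PG"
  then have "x @ q \<in> {x @ \<pi> x | x. x \<in> topspace \<tau>}" by (simp only: PG_def)
  then obtain a where "x @ q = a @ \<pi> a" "a \<in> GG" using topG by blast
  then show "x \<in> GG \<and> q = \<pi> x" using l lenG by (auto simp: append_eq_append_conv)
qed (use topG in \<open>auto simp: PG_def\<close>)

lemma fam_mem: "def_family D m N T S \<Longrightarrow> length t = m \<Longrightarrow>
   t @ x \<in> fam T S \<longleftrightarrow> t \<in> T \<and> x \<in> S t"
proof
  assume f: "def_family D m N T S" and l: "length t = m" and "t @ x \<in> fam T S"
  then have "t @ x \<in> {t @ x | t x. t \<in> T \<and> x \<in> S t}" by (simp only: fam_def)
  then obtain a b where ab: "t @ x = a @ b" "a \<in> T" "b \<in> S a" by blast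
  have "length a = m" using f ab memlen[OF SD] unfolding def_family_def by blast
  then show "t \<in> T \<and> x \<in> S t" using ab l by (auto simp: append_eq_append_conv)
qed (auto simp: fam_def)

lemma famD: "def_family D m N T S \<Longrightarrow> fam T S \<in> D (m + N)"
  unfolding def_family_def fam_def by blast

lemma invG: "g \<in> GG \<Longrightarrow> inv\<^bsub>G\<^esub> g \<in> GG" using group.inv_closed[OF grp] by blast

end


lemma map_nth_upt0: "l \<le> length xs \<Longrightarrow> map ((!) xs) [0..<l] = take l xs"
  by (rule nth_equalityI) auto

lemma map_nth_upt2: "j \<le> length xs \<Longrightarrow> map ((!) xs) [i..<j] = take (j - i) (drop i xs)"
  by (rule nth_equalityI) auto

lemmas mnu = map_nth_upt2

context S5 begin

lemmas dbl = defbl_blk[OF SD] defbl_and[OF SD] defbl_ex[OF SD] defbl_all[OF SD] defbl_not[OF SD]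
   defbl_imp[OF SD] defbl_or[OF SD] defbl_mem[OF SD]

lemma constD: "{c} \<in> D (length c)" using const_D[OF SD c1] .

lemma fiber_D:
  assumes f: "def_family D m N T S" and t: "t \<in> T"
  shows "S t \<in> D N"
proof -
  have lt: "length t = m" using f t memlen[OF SD] unfolding def_family_def by blast
  have A: "defbl D (N + m) (\<lambda>zs. take m (drop N zs) \<in> {t})"
    by (rule dbl(1)[OF constD[of t, unfolded lt], where idx="[N..<N+m]"]) (auto simp: mnu)
  have B: "defbl D (N + m) (\<lambda>zs. drop N zs @ take N zs \<in> fam T S)"
    by (rule dbl(1)[OF famD[OF f], where idx="[N..<N+m] @ [0..<N]"]) (auto simp: mnu)
  have "defbl D (N + m) (\<lambda>zs. take m (drop N zs) \<in> {t} \<and> drop N zs @ take N zs \<in> fam T S)"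
    by (rule dbl(2)[OF A B])
  then have "defbl D N (\<lambda>xs. \<exists>ys. length ys = m \<and> (take m (drop N (xs @ ys)) \<in> {t} \<and> drop N (xs @ ys) @ take N (xs @ ys) \<in> fam T S))"
    by (rule dbl)
  then have "defbl D N (\<lambda>xs. xs \<in> S t)"
    by (rule defbl_cong[OF SD]) (use fam_mem[OF f lt] lt t in \<open>auto simp del: mem_Collect_eq\<close>)
  then have "{xs. length xs = N \<and> xs \<in> S t} \<in> D N" by (rule defbl_D[OF SD])
  moreover have "{xs. length xs = N \<and> xs \<in> S t} = S t" using f t unfolding def_family_def Mn_def by auto
  ultimately show ?thesis by simp
qed

end

context S5 begin

lemma famT: "def_family D m N T S \<Longrightarrow> t \<in> T \<Longrightarrow> length t = m"
  unfolding def_family_def using memlen[OF SD] by blast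

lemma famS: "def_family D m N T S \<Longrightarrow> t \<in> T \<Longrightarrow> x \<in> S t \<Longrightarrow> length x = N"
  unfolding def_family_def Mn_def by blast

lemma famI: "T \<in> D m \<Longrightarrow> (\<forall>t\<in>T. S t \<subseteq> Mn N) \<Longrightarrow> fam T S \<in> D (m + N) \<Longrightarrow> def_family D m N T S"
  unfolding def_family_def fam_def by blast

lemma image_fam:
  assumes f: "def_family D m n T S" and sub: "\<forall>t\<in>T. S t \<subseteq> GG"
  shows "def_family D m k T (\<lambda>t. \<pi> ` S t)"
proof -
  have A: "defbl D (m+k+n) (\<lambda>zs. take m zs @ drop (m+k) zs \<in> fam T S)"
    by (rule dbl(1)[OF famD[OF f], where idx="[0..<m] @ [m+k..<m+k+n]"]) (auto simp: mnu)
  have B: "defbl D (m+k+n) (\<lambda>zs. drop (m+k) zs @ take k (drop m zs) \<in> PG)"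
    by (rule dbl(1)[OF PGD, where idx="[m+k..<m+k+n] @ [m..<m+k]"]) (auto simp: mnu)
  have "defbl D (m+k) (\<lambda>xs. \<exists>g. length g = n \<and> (take m (xs@g) @ drop (m+k) (xs@g) \<in> fam T S \<and>
      drop (m+k) (xs@g) @ take k (drop m (xs@g)) \<in> PG))"
    by (rule dbl(3)[OF dbl(2)[OF A B]])
  then have "defbl D (m+k) (\<lambda>xs. \<exists>g. length g = n \<and> take m xs @ g \<in> fam T S \<and> g @ drop m xs \<in> PG)"
    by (rule defbl_cong[OF SD]) simp
  then have D1: "{xs. length xs = m+k \<and> (\<exists>g. length g = n \<and> take m xs @ g \<in> fam T S \<and> g @ drop m xs \<in> PG)} \<in> D (m+k)"
    by (rule defbl_D[OF SD])
  have "fam T (\<lambda>t. \<pi> ` S t) = {xs. length xs = m+k \<and> (\<exists>g. length g = n \<and> take m xs @ g \<in> fam T S \<and> g @ drop m xs \<in> PG)}"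
  proof (intro Set.set_eqI iffI)
    fix xs assume "xs \<in> fam T (\<lambda>t. \<pi> ` S t)"
    then obtain t s where ts: "xs = t @ \<pi> s" "t \<in> T" "s \<in> S t" unfolding fam_def by blast
    have lt: "length t = m" using famT[OF f ts(2)] .
    have sG: "s \<in> GG" using sub ts by blast
    have lp: "length (\<pi> s) = k" using lenQ[OF pi_Q[OF sG]] .
    have "t @ s \<in> fam T S" using fam_mem[OF f lt] ts by blast
    moreover have "s @ \<pi> s \<in> PG" using pg_mem[OF lenG[OF sG]] sG by blast
    ultimately show "xs \<in> {xs. length xs = m+k \<and> (\<exists>g. length g = n \<and> take m xs @ g \<in> fam T S \<and> g @ drop m xs \<in> PG)}"
      using ts lt lp lenG[OF sG] by auto
  next
    fix xs assume "xs \<in> {xs. length xs = m+k \<and> (\<exists>g. length g = n \<and> take m xs @ g \<in> fam T S \<and> g @ drop m xs \<in> PG)}"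
    then obtain g where g: "length xs = m + k" "length g = n" "take m xs @ g \<in> fam T S" "g @ drop m xs \<in> PG" by blast
    have 1: "take m xs \<in> T \<and> g \<in> S (take m xs)" using fam_mem[OF f, of "take m xs" g] g by simp
    have 2: "g \<in> GG \<and> drop m xs = \<pi> g" using pg_mem[of g "drop m xs"] g by simp
    have "xs = take m xs @ drop m xs" by simp
    then show "xs \<in> fam T (\<lambda>t. \<pi> ` S t)" unfolding fam_def using 1 2 by blast
  qed
  with D1 have "fam T (\<lambda>t. \<pi> ` S t) \<in> D (m + k)" by simp
  moreover have "T \<in> D m" using f unfolding def_family_def by blast
  moreover have "\<forall>t\<in>T. \<pi> ` S t \<subseteq> Mn k"
  proof (intro ballI image_subsetI)
    fix t s assume "t \<in> T" "s \<in> S t"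
    then have "s \<in> GG" using sub by blast
    then show "\<pi> s \<in> Mn k" using lenQ pi_Q by simp
  qed
  ultimately show ?thesis by (intro famI)
qed

end

context S5 begin

lemma dropN1: "length zs = Suc N \<Longrightarrow> [zs ! N] = drop N zs"
  by (metis Cons_nth_drop_Suc drop_all le_refl lessI)

definition "ind = topology (\<lambda>U. U = {} \<or> U = {p0, p1})"

lemma ind_istop: "istopology (\<lambda>U. U = {} \<or> U = {p0, p1})"
  unfolding istopology_def by auto

lemma ind_open: "openin ind U \<longleftrightarrow> U = {} \<or> U = {p0, p1}"
  unfolding ind_def using ind_istop by simp

lemma ind_top: "topspace ind = {p0, p1}"
  unfolding topspace_def ind_open by auto

lemma p01: "p0 \<noteq> p1" using e0 by simp

lemma ind_space: "def_top_space D 1 ind"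
proof -
  have "{p0} \<union> {p1} \<in> D 1" using c1 st3[OF SD] by blast
  then have tD: "{p0, p1} \<in> D 1" by (simp add: insert_commute)
  have "Mn 0 = {[]}" by (auto simp: Mn_def)
  have f: "def_family D 0 1 (Mn 0) (\<lambda>_. {p0, p1})"
  proof (rule famI)
    show "Mn 0 \<in> D 0" by (rule st2[OF SD])
    show "\<forall>t\<in>Mn 0. {p0, p1} \<subseteq> Mn 1" by simp
    have "fam (Mn 0) (\<lambda>_. {p0, p1}) = {p0, p1}" unfolding fam_def Mn_def by auto
    then show "fam (Mn 0) (\<lambda>_. {p0, p1}) \<in> D (0 + 1)" using tD by simp
  qed
  show ?thesis unfolding def_top_space_def
    apply (intro conjI)
     using tD apply (simp add: ind_top)
    apply (rule exI[of _ 0], rule exI[of _ "Mn 0"], rule exI[of _ "\<lambda>_. {p0, p1}"])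
    using f by (auto simp: ind_open Mn_def)
qed

lemma ind_cont: "(\<forall>x\<in>topspace X. f x \<in> {p0, p1}) \<Longrightarrow> continuous_map X ind f"
proof -
  assume a: "\<forall>x\<in>topspace X. f x \<in> {p0, p1}"
  then have "{x \<in> topspace X. f x \<in> {p0, p1}} = topspace X" by blast
  then show ?thesis unfolding continuous_map_def ind_open ind_top using a by auto
qed

lemma ind_map:
  assumes X: "X \<in> D N" and A: "A \<in> D N" and f: "\<forall>x\<in>X. f x = (if x \<in> A then p0 else p1)"
  shows "def_map D N 1 X f"
proof -
  have a1: "defbl D (N+1) (\<lambda>zs. take N zs \<in> X)"
    by (rule dbl(1)[OF X, where idx="[0..<N]"]) (auto simp: mnu)
  have a2: "defbl D (N+1) (\<lambda>zs. take N zs \<in> A)"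
    by (rule dbl(1)[OF A, where idx="[0..<N]"]) (auto simp: mnu)
  have a3: "defbl D (N+1) (\<lambda>zs. drop N zs \<in> {p0})"
    by (rule dbl(1)[OF c1[rule_format], where idx="[N..<N+1]"]) (auto simp: dropN1)
  have a4: "defbl D (N+1) (\<lambda>zs. drop N zs \<in> {p1})"
    by (rule dbl(1)[OF c1[rule_format], where idx="[N..<N+1]"]) (auto simp: dropN1)
  have "defbl D (N+1) (\<lambda>zs. take N zs \<in> X \<and> ((take N zs \<in> A \<and> drop N zs \<in> {p0}) \<or> (\<not> take N zs \<in> A \<and> drop N zs \<in> {p1})))"
    by (intro dbl(2) dbl(7) a1 a2 a3 a4 dbl(5))
  then have D1: "{zs. length zs = N + 1 \<and> (take N zs \<in> X \<and> ((take N zs \<in> A \<and> drop N zs \<in> {p0}) \<or> (\<not> take N zs \<in> A \<and> drop N zs \<in> {p1})))} \<in> D (N+1)"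
    by (rule defbl_D[OF SD])
  have lX: "x \<in> X \<Longrightarrow> length x = N" for x using memlen[OF SD X] .
  have "{x @ f x | x. x \<in> X} = {zs. length zs = N + 1 \<and> (take N zs \<in> X \<and> ((take N zs \<in> A \<and> drop N zs \<in> {p0}) \<or> (\<not> take N zs \<in> A \<and> drop N zs \<in> {p1})))}"
  proof (intro Set.set_eqI iffI)
    fix zs assume "zs \<in> {x @ f x | x. x \<in> X}"
    then obtain x where "zs = x @ f x" "x \<in> X" by blast
    then show "zs \<in> {zs. length zs = N + 1 \<and> (take N zs \<in> X \<and> ((take N zs \<in> A \<and> drop N zs \<in> {p0}) \<or> (\<not> take N zs \<in> A \<and> drop N zs \<in> {p1})))}"
      using f lX by auto
  next
    fix zs assume z: "zs \<in> {zs. length zs = N + 1 \<and> (take N zs \<in> X \<and> ((take N zs \<in> A \<and> drop N zs \<in> {p0}) \<or> (\<not> take N zs \<in> A \<and> drop N zs \<in> {p1})))}"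
    have e: "zs = take N zs @ drop N zs" by simp
    have "drop N zs = f (take N zs)" using z f by auto
    then have "zs = take N zs @ f (take N zs)" using e by metis
    then show "zs \<in> {x @ f x | x. x \<in> X}" using z by blast
  qed
  then show ?thesis unfolding def_map_def using D1 f by auto
qed

end


sublocale S5 \<subseteq> G: group G by (rule S5.grp, unfold_locales)

context S5 begin

lemma orb_iff: "h \<in> H \<Longrightarrow> x \<in> GG \<Longrightarrow> (h \<otimes>\<^bsub>G\<^esub> x \<in> H \<longleftrightarrow> x \<in> H)"
proof
  assume h: "h \<in> H" and x: "x \<in> GG" and hx: "h \<otimes>\<^bsub>G\<^esub> x \<in> H"
  have hG: "h \<in> GG" using h HG by blast
  have "inv\<^bsub>G\<^esub> h \<otimes>\<^bsub>G\<^esub> (h \<otimes>\<^bsub>G\<^esub> x) = x"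
    using hG x by (simp add: G.m_assoc[symmetric])
  moreover have "inv\<^bsub>G\<^esub> h \<otimes>\<^bsub>G\<^esub> (h \<otimes>\<^bsub>G\<^esub> x) \<in> H"
    using Hsub h hx by (simp add: subgroup.m_closed subgroup.m_inv_closed)
  ultimately show "x \<in> H" by simp
next
  assume h: "h \<in> H" and x: "x \<in> GG" and "x \<in> H"
  then show "h \<otimes>\<^bsub>G\<^esub> x \<in> H" using Hsub by (simp add: subgroup.m_closed)
qed

lemma ImD: "\<pi> ` GG \<in> D k"
proof -
  have A: "defbl D (k+n) (\<lambda>zs. drop k zs @ take k zs \<in> PG)"
    by (rule dbl(1)[OF PGD, where idx="[k..<k+n] @ [0..<k]"]) (auto simp: mnu)
  have "defbl D k (\<lambda>q. \<exists>g. length g = n \<and> drop k (q@g) @ take k (q@g) \<in> PG)"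
    by (rule dbl(3)[OF A])
  then have "defbl D k (\<lambda>q. q \<in> \<pi> ` GG)"
  proof (rule defbl_cong[OF SD])
    fix q :: "'a list" assume lq: "length q = k"
    have "(\<exists>g. length g = n \<and> drop k (q@g) @ take k (q@g) \<in> PG) \<longleftrightarrow> (\<exists>g. length g = n \<and> g @ q \<in> PG)"
      using lq by simp
    also have "\<dots> \<longleftrightarrow> q \<in> \<pi> ` GG" using pg_mem lenG by blast
    finally show "(\<exists>g. length g = n \<and> drop k (q@g) @ take k (q@g) \<in> PG) = (q \<in> \<pi> ` GG)" .
  qed
  then have "{q. length q = k \<and> q \<in> \<pi> ` GG} \<in> D k" by (rule defbl_D[OF SD])
  moreover have "{q. length q = k \<and> q \<in> \<pi> ` GG} = \<pi> ` GG" using lenQ pi_Q by blast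
  ultimately show ?thesis by simp
qed

lemma pi_surj: "q \<in> Q \<Longrightarrow> \<exists>g\<in>GG. \<pi> g = q"
proof -
  assume q: "q \<in> Q"
  have c0: "def_cont_map D n 1 \<tau> ind (\<lambda>_. p0)"
    unfolding def_cont_map_def topG[symmetric]
    by (intro conjI ind_cont ind_map[OF GD[folded topG] GD[folded topG]]) auto
  have s1: "def_cont_map D k 1 \<tau>Q ind (\<lambda>_. p0)"
    unfolding def_cont_map_def
    by (intro conjI ind_cont ind_map[OF QD QD]) auto
  have s2: "def_cont_map D k 1 \<tau>Q ind (\<lambda>q. if q \<in> \<pi> ` GG then p0 else p1)"
    unfolding def_cont_map_def
    by (intro conjI ind_cont ind_map[OF QD ImD]) auto
  have "\<forall>q\<in>Q. (\<lambda>_. p0) q = (\<lambda>q. if q \<in> \<pi> ` GG then p0 else p1) q"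
  proof -
    have u: "\<forall>\<psi>1 \<psi>2. def_cont_map D k 1 \<tau>Q ind \<psi>1 \<and> (\<forall>g\<in>GG. (\<lambda>_. p0) g = \<psi>1 (\<pi> g)) \<and>
                  def_cont_map D k 1 \<tau>Q ind \<psi>2 \<and> (\<forall>g\<in>GG. (\<lambda>_. p0) g = \<psi>2 (\<pi> g)) \<longrightarrow>
                  (\<forall>q\<in>Q. \<psi>1 q = \<psi>2 q)"
      using univ[OF ind_space c0, of] by blast
    show ?thesis
      apply (rule u[THEN spec, THEN spec, THEN mp])
      using s1 s2 by auto
  qed
  then have "q \<in> \<pi> ` GG" using q p01 by (metis (full_types))
  then show ?thesis by blast
qed

lemma AaD: assumes a: "a \<in> GG" shows "{g \<in> GG. g \<otimes>\<^bsub>G\<^esub> inv\<^bsub>G\<^esub> a \<in> H} \<in> D n"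
proof -
  have ia: "inv\<^bsub>G\<^esub> a \<in> GG" using invG[OF a] .
  have lia: "length (inv\<^bsub>G\<^esub> a) = n" using lenG[OF ia] .
  have b1: "defbl D (n+(n+n)) (\<lambda>zs. take n zs \<in> GG)"
    by (rule dbl(1)[OF GD, where idx="[0..<n]"]) (auto simp: mnu)
  have b2: "defbl D (n+(n+n)) (\<lambda>zs. take n (drop n zs) \<in> {inv\<^bsub>G\<^esub> a})"
    by (rule dbl(1)[OF constD[of "inv\<^bsub>G\<^esub> a", unfolded lia], where idx="[n..<n+n]"]) (auto simp: mnu)
  have b3: "defbl D (n+(n+n)) (\<lambda>zs. drop (n+n) zs \<in> H)"
    by (rule dbl(1)[OF HD, where idx="[n+n..<n+n+n]"]) (auto simp: mnu)
  have b4: "defbl D (n+(n+n)) (\<lambda>zs. zs \<in> Mult)"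
    using dbl(8)[OF MultD] by (simp add: add.assoc)
  have "defbl D n (\<lambda>g. \<exists>yz. length yz = n+n \<and> (take n (g@yz) \<in> GG \<and> take n (drop n (g@yz)) \<in> {inv\<^bsub>G\<^esub> a} \<and> drop (n+n) (g@yz) \<in> H \<and> g@yz \<in> Mult))"
    by (intro dbl(3) dbl(2) b1 b2 b3 b4)
  then have "defbl D n (\<lambda>g. g \<in> {g \<in> GG. g \<otimes>\<^bsub>G\<^esub> inv\<^bsub>G\<^esub> a \<in> H})"
  proof (rule defbl_cong[OF SD])
    fix g :: "'a list" assume lg: "length g = n"
    show "(\<exists>yz. length yz = n+n \<and> (take n (g@yz) \<in> GG \<and> take n (drop n (g@yz)) \<in> {inv\<^bsub>G\<^esub> a} \<and> drop (n+n) (g@yz) \<in> H \<and> g@yz \<in> Mult))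
       = (g \<in> {g \<in> GG. g \<otimes>\<^bsub>G\<^esub> inv\<^bsub>G\<^esub> a \<in> H})"
    proof
      assume "\<exists>yz. length yz = n+n \<and> (take n (g@yz) \<in> GG \<and> take n (drop n (g@yz)) \<in> {inv\<^bsub>G\<^esub> a} \<and> drop (n+n) (g@yz) \<in> H \<and> g@yz \<in> Mult)"
      then obtain yz where y: "length yz = n+n" "take n (g@yz) \<in> GG" "take n (drop n (g@yz)) \<in> {inv\<^bsub>G\<^esub> a}"
        "drop (n+n) (g@yz) \<in> H" "g@yz \<in> Mult" by blast
      have y1: "take n yz = inv\<^bsub>G\<^esub> a" using y(3) lg by simp
      have y2: "drop n yz \<in> H" using y(4) lg by simp
      have "yz = take n yz @ drop n yz" by simp
      then have "g @ inv\<^bsub>G\<^esub> a @ drop n yz \<in> Mult" using y(5) y1 by metis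
      then have "g \<in> GG \<and> drop n yz = g \<otimes>\<^bsub>G\<^esub> inv\<^bsub>G\<^esub> a" using mult_mem[OF lg lia] by blast
      then show "g \<in> {g \<in> GG. g \<otimes>\<^bsub>G\<^esub> inv\<^bsub>G\<^esub> a \<in> H}" using y2 by simp
    next
      assume g: "g \<in> {g \<in> GG. g \<otimes>\<^bsub>G\<^esub> inv\<^bsub>G\<^esub> a \<in> H}"
      have gm: "g \<otimes>\<^bsub>G\<^esub> inv\<^bsub>G\<^esub> a \<in> GG" using g HG by blast
      have "g @ inv\<^bsub>G\<^esub> a @ (g \<otimes>\<^bsub>G\<^esub> inv\<^bsub>G\<^esub> a) \<in> Mult" using mult_mem[OF lg lia] g ia by blast
      then show "\<exists>yz. length yz = n+n \<and> (take n (g@yz) \<in> GG \<and> take n (drop n (g@yz)) \<in> {inv\<^bsub>G\<^esub> a} \<and> drop (n+n) (g@yz) \<in> H \<and> g@yz \<in> Mult)"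
        using g lg lia lenG[OF gm] by (intro exI[of _ "inv\<^bsub>G\<^esub> a @ (g \<otimes>\<^bsub>G\<^esub> inv\<^bsub>G\<^esub> a)"]) simp
    qed
  qed
  then have "{g. length g = n \<and> g \<in> {g \<in> GG. g \<otimes>\<^bsub>G\<^esub> inv\<^bsub>G\<^esub> a \<in> H}} \<in> D n" by (rule defbl_D[OF SD])
  moreover have "{g. length g = n \<and> g \<in> {g \<in> GG. g \<otimes>\<^bsub>G\<^esub> inv\<^bsub>G\<^esub> a \<in> H}} = {g \<in> GG. g \<otimes>\<^bsub>G\<^esub> inv\<^bsub>G\<^esub> a \<in> H}"
    using lenG by blast
  ultimately show ?thesis by simp
qed

lemma pi_fib: assumes a: "a \<in> GG" and c: "c \<in> GG" and eq: "\<pi> c = \<pi> a"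
  shows "c \<otimes>\<^bsub>G\<^esub> inv\<^bsub>G\<^esub> a \<in> H"
proof -
  define A where "A = {g \<in> GG. g \<otimes>\<^bsub>G\<^esub> inv\<^bsub>G\<^esub> a \<in> H}"
  define \<phi> where "\<phi> = (\<lambda>g. if g \<in> A then p0 else p1)"
  have AD: "A \<in> D n" unfolding A_def using AaD[OF a] .
  have c0: "def_cont_map D n 1 \<tau> ind \<phi>"
    unfolding def_cont_map_def \<phi>_def
    by (intro conjI ind_cont ind_map[OF GD[folded topG] AD]) auto
  have orb: "\<forall>g\<in>GG. \<forall>h\<in>H. \<phi> (h \<otimes>\<^bsub>G\<^esub> g) = \<phi> g"
  proof (intro ballI)
    fix g h assume g: "g \<in> GG" and h: "h \<in> H"
    have hG: "h \<in> GG" using h HG by blast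
    have ia: "inv\<^bsub>G\<^esub> a \<in> GG" using invG[OF a] .
    have "h \<otimes>\<^bsub>G\<^esub> g \<otimes>\<^bsub>G\<^esub> inv\<^bsub>G\<^esub> a = h \<otimes>\<^bsub>G\<^esub> (g \<otimes>\<^bsub>G\<^esub> inv\<^bsub>G\<^esub> a)"
      using hG g ia by (simp add: G.m_assoc)
    moreover have "h \<otimes>\<^bsub>G\<^esub> g \<in> GG" using hG g by simp
    moreover have "g \<otimes>\<^bsub>G\<^esub> inv\<^bsub>G\<^esub> a \<in> GG" using g ia by simp
    ultimately have "h \<otimes>\<^bsub>G\<^esub> g \<in> A \<longleftrightarrow> g \<in> A" unfolding A_def using orb_iff[OF h] g by auto
    then show "\<phi> (h \<otimes>\<^bsub>G\<^esub> g) = \<phi> g" unfolding \<phi>_def by simp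
  qed
  obtain \<psi> where "\<forall>g\<in>GG. \<phi> g = \<psi> (\<pi> g)" using univ[OF ind_space c0 orb] by blast
  then have "\<phi> c = \<phi> a" using a c eq by metis
  moreover have "a \<in> A" unfolding A_def using a Hsub by (simp add: subgroup.one_closed)
  ultimately have "c \<in> A" unfolding \<phi>_def using p01 by (auto split: if_splits)
  then show ?thesis unfolding A_def by blast
qed

end

context S5 begin

lemma lmul_cont: "b \<in> GG \<Longrightarrow> continuous_map \<tau> \<tau> (\<lambda>x. b \<otimes>\<^bsub>G\<^esub> x)"
proof -
  assume b: "b \<in> GG"
  have "continuous_map \<tau> (prod_topology \<tau> \<tau>) (\<lambda>x. (b, x))"
    using b topG by (intro continuous_map_pairedI) auto
  from continuous_map_compose[OF this mult_cont] show ?thesis by (simp add: o_def)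
qed

lemma rmul_cont: "b \<in> GG \<Longrightarrow> continuous_map \<tau> \<tau> (\<lambda>x. x \<otimes>\<^bsub>G\<^esub> b)"
proof -
  assume b: "b \<in> GG"
  have "continuous_map \<tau> (prod_topology \<tau> \<tau>) (\<lambda>x. (x, b))"
    using b topG by (intro continuous_map_pairedI) auto
  from continuous_map_compose[OF this mult_cont] show ?thesis by (simp add: o_def)
qed

lemma f2_cont: "continuous_map (prod_topology \<tau> \<tau>) \<tau> (\<lambda>(h, z). inv\<^bsub>G\<^esub> h \<otimes>\<^bsub>G\<^esub> z)"
proof -
  have "continuous_map (prod_topology \<tau> \<tau>) (prod_topology \<tau> \<tau>) (\<lambda>p. (inv\<^bsub>G\<^esub> (fst p), snd p))"
    by (intro continuous_map_pairedI continuous_map_snd continuous_map_compose[OF continuous_map_fst inv_cont, unfolded o_def])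
  from continuous_map_compose[OF this mult_cont] have "continuous_map (prod_topology \<tau> \<tau>) \<tau> (\<lambda>x. inv\<^bsub>G\<^esub> fst x \<otimes>\<^bsub>G\<^esub> snd x)"
    by (simp add: o_def)
  moreover have "(\<lambda>x. inv\<^bsub>G\<^esub> fst x \<otimes>\<^bsub>G\<^esub> snd x) = (\<lambda>(h, z). inv\<^bsub>G\<^esub> h \<otimes>\<^bsub>G\<^esub> z)" by auto
  ultimately show ?thesis by simp
qed

lemma img_iff: assumes S: "S \<subseteq> GG" and g: "g \<in> GG"
  shows "\<pi> g \<in> \<pi> ` S \<longleftrightarrow> (\<exists>h\<in>H. \<exists>s\<in>S. g = h \<otimes>\<^bsub>G\<^esub> s)"
proof
  assume "\<pi> g \<in> \<pi> ` S"
  then obtain s where s: "s \<in> S" "\<pi> g = \<pi> s" by auto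
  have sG: "s \<in> GG" using s S by blast
  have h: "g \<otimes>\<^bsub>G\<^esub> inv\<^bsub>G\<^esub> s \<in> H" using pi_fib[OF sG g s(2)] .
  have "g = (g \<otimes>\<^bsub>G\<^esub> inv\<^bsub>G\<^esub> s) \<otimes>\<^bsub>G\<^esub> s" using g sG by (simp add: G.m_assoc)
  then show "\<exists>h\<in>H. \<exists>s\<in>S. g = h \<otimes>\<^bsub>G\<^esub> s" using h s by blast
next
  assume "\<exists>h\<in>H. \<exists>s\<in>S. g = h \<otimes>\<^bsub>G\<^esub> s"
  then obtain h s where "h \<in> H" "s \<in> S" "g = h \<otimes>\<^bsub>G\<^esub> s" by blast
  then show "\<pi> g \<in> \<pi> ` S" using pi_orb S by auto
qed

definition "tF = topology (\<lambda>U. U \<subseteq> Q \<and> openin \<tau> {g \<in> GG. \<pi> g \<in> U})"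

lemma tF_istop: "istopology (\<lambda>U. U \<subseteq> Q \<and> openin \<tau> {g \<in> GG. \<pi> g \<in> U})"
  unfolding istopology_def
proof (rule conjI; intro allI impI)
  fix S T assume "S \<subseteq> Q \<and> openin \<tau> {g \<in> GG. \<pi> g \<in> S}" "T \<subseteq> Q \<and> openin \<tau> {g \<in> GG. \<pi> g \<in> T}"
  moreover have "{g \<in> GG. \<pi> g \<in> S \<inter> T} = {g \<in> GG. \<pi> g \<in> S} \<inter> {g \<in> GG. \<pi> g \<in> T}" by blast
  ultimately show "S \<inter> T \<subseteq> Q \<and> openin \<tau> {g \<in> GG. \<pi> g \<in> S \<inter> T}" by auto
next
  fix K assume K: "\<forall>S\<in>K. S \<subseteq> Q \<and> openin \<tau> {g \<in> GG. \<pi> g \<in> S}"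
  have "{g \<in> GG. \<pi> g \<in> \<Union>K} = \<Union>((\<lambda>S. {g \<in> GG. \<pi> g \<in> S}) ` K)" by blast
  moreover have "openin \<tau> (\<Union>((\<lambda>S. {g \<in> GG. \<pi> g \<in> S}) ` K))" using K by (intro openin_Union) auto
  ultimately show "\<Union>K \<subseteq> Q \<and> openin \<tau> {g \<in> GG. \<pi> g \<in> \<Union>K}" using K by auto
qed

lemma tF_open: "openin tF U \<longleftrightarrow> U \<subseteq> Q \<and> openin \<tau> {g \<in> GG. \<pi> g \<in> U}"
  unfolding tF_def using tF_istop by simp

lemma tF_top: "topspace tF = Q"
proof -
  have "{g \<in> GG. \<pi> g \<in> Q} = GG" using pi_Q by blast
  then have "openin tF Q" unfolding tF_open using topG by (metis openin_topspace order_refl)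
  then show ?thesis using openin_subset tF_open by (metis openin_topspace subset_antisym)
qed

lemma Bsub: "t \<in> TB \<Longrightarrow> B t \<subseteq> GG"
  using Bopen openin_subset topG by metis

lemma tF_space: "def_top_space D k tF"
  unfolding def_top_space_def
proof (intro conjI)
  show "topspace tF \<in> D k" using QD tF_top by simp
  have f: "def_family D mB k TB (\<lambda>t. \<pi> ` B t)" using image_fam[OF Bfam] Bsub by blast
  have o: "\<forall>t\<in>TB. openin tF (\<pi> ` B t)"
  proof
    fix t assume t: "t \<in> TB"
    have "openin \<tau> {g \<in> GG. \<pi> g \<in> \<pi> ` B t}"
    proof (subst openin_subopen, intro ballI)
      fix g assume "g \<in> {g \<in> GG. \<pi> g \<in> \<pi> ` B t}"
      then have g: "g \<in> GG" "\<pi> g \<in> \<pi> ` B t" by auto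
      then obtain h b where hb: "h \<in> H" "b \<in> B t" "g = h \<otimes>\<^bsub>G\<^esub> b" using img_iff[OF Bsub[OF t] g(1)] by blast
      have hG: "h \<in> GG" using hb HG by blast
      have bG: "b \<in> GG" using hb Bsub t by blast
      let ?T = "{x \<in> topspace \<tau>. inv\<^bsub>G\<^esub> h \<otimes>\<^bsub>G\<^esub> x \<in> B t}"
      have "openin \<tau> ?T" using openin_continuous_map_preimage[OF lmul_cont[OF invG[OF hG]]] Bopen t by blast
      moreover have "g \<in> ?T" using hb hG bG g topG by (simp add: G.m_assoc[symmetric])
      moreover have "?T \<subseteq> {g \<in> GG. \<pi> g \<in> \<pi> ` B t}"
      proof
        fix x assume x: "x \<in> ?T"
        have xG: "x \<in> GG" using x topG by blast
        have "x = h \<otimes>\<^bsub>G\<^esub> (inv\<^bsub>G\<^esub> h \<otimes>\<^bsub>G\<^esub> x)" using hG xG by (simp add: G.m_assoc[symmetric])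
        then have "\<pi> x \<in> \<pi> ` B t" using img_iff[OF Bsub[OF t] xG] hb x by blast
        then show "x \<in> {g \<in> GG. \<pi> g \<in> \<pi> ` B t}" using xG by blast
      qed
      ultimately show "\<exists>T. openin \<tau> T \<and> g \<in> T \<and> T \<subseteq> {g \<in> GG. \<pi> g \<in> \<pi> ` B t}" by blast
    qed
    moreover have "\<pi> ` B t \<subseteq> Q" using pi_Q Bsub[OF t] by blast
    ultimately show "openin tF (\<pi> ` B t)" unfolding tF_open by blast
  qed
  have b: "\<forall>U. openin tF U \<longrightarrow> (\<forall>x\<in>U. \<exists>t\<in>TB. x \<in> \<pi> ` B t \<and> \<pi> ` B t \<subseteq> U)"
  proof (intro allI impI ballI)
    fix U q assume U: "openin tF U" and q: "q \<in> U"
    have qQ: "q \<in> Q" using U q tF_open by blast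
    obtain g where g: "g \<in> GG" "\<pi> g = q" using pi_surj[OF qQ] by blast
    have "openin \<tau> {g \<in> GG. \<pi> g \<in> U}" using U tF_open by blast
    moreover have "g \<in> {g \<in> GG. \<pi> g \<in> U}" using g q by blast
    ultimately obtain t where t: "t \<in> TB" "g \<in> B t" "B t \<subseteq> {g \<in> GG. \<pi> g \<in> U}" using Bbase by meson
    then show "\<exists>t\<in>TB. q \<in> \<pi> ` B t \<and> \<pi> ` B t \<subseteq> U" using g by blast
  qed
  show "\<exists>m T B. def_family D m k T B \<and> (\<forall>t\<in>T. openin tF (B t)) \<and>
        (\<forall>U. openin tF U \<longrightarrow> (\<forall>x\<in>U. \<exists>t\<in>T. x \<in> B t \<and> B t \<subseteq> U))"
    using f o b by blast
qed

lemma tF_sub: "openin tF U \<Longrightarrow> openin \<tau>Q U"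
proof -
  assume U: "openin tF U"
  have c: "def_cont_map D n k \<tau> tF \<pi>"
    unfolding def_cont_map_def
  proof
    show "continuous_map \<tau> tF \<pi>" unfolding continuous_map_def tF_top
      using pi_Q topG tF_open by auto
    show "def_map D n k (topspace \<tau>) \<pi>" by (rule pi_map)
  qed
  obtain \<psi> where \<psi>: "def_cont_map D k k \<tau>Q tF \<psi>" "\<forall>g\<in>GG. \<pi> g = \<psi> (\<pi> g)"
    using univ[OF tF_space c pi_orb] by blast
  have id: "q \<in> Q \<Longrightarrow> \<psi> q = q" for q using pi_surj \<psi>(2) by metis
  have "openin \<tau>Q {x \<in> Q. \<psi> x \<in> U}"
    using \<psi>(1) U unfolding def_cont_map_def by (blast intro: openin_continuous_map_preimage)
  moreover have "{x \<in> Q. \<psi> x \<in> U} = U" using id U tF_open by auto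
  ultimately show ?thesis by simp
qed

lemma tF_closed: "closedin tF S \<Longrightarrow> closedin \<tau>Q S"
  unfolding closedin_def tF_top using tF_sub by blast

end

context S5 begin

lemma SxD: assumes x: "length x = n" shows "{s \<in> TB. x \<in> B s} \<in> D mB"
proof -
  have a1: "defbl D (mB+n) (\<lambda>zs. drop mB zs \<in> {x})"
    by (rule dbl(1)[OF constD[of x, unfolded x], where idx="[mB..<mB+n]"]) (auto simp: mnu)
  have a2: "defbl D (mB+n) (\<lambda>zs. zs \<in> fam TB B)" by (rule dbl(8)[OF famD[OF Bfam]])
  have "defbl D mB (\<lambda>s. \<exists>y. length y = n \<and> (drop mB (s@y) \<in> {x} \<and> s@y \<in> fam TB B))"
    by (intro dbl(3) dbl(2) a1 a2)
  then have "defbl D mB (\<lambda>s. s \<in> {s \<in> TB. x \<in> B s})"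
    by (rule defbl_cong[OF SD]) (use fam_mem[OF Bfam] x in auto)
  then have "{s. length s = mB \<and> s \<in> {s \<in> TB. x \<in> B s}} \<in> D mB" by (rule defbl_D[OF SD])
  moreover have "{s. length s = mB \<and> s \<in> {s \<in> TB. x \<in> B s}} = {s \<in> TB. x \<in> B s}" using lenTB by blast
  ultimately show ?thesis by simp
qed

lemma all_cong_len: "(\<And>s'. length s' = m \<Longrightarrow> X s' = Y s') \<Longrightarrow> (\<forall>s'. length s' = m \<longrightarrow> X s') = (\<forall>s'. length s' = m \<longrightarrow> Y s')"
  by blast

lemma allTB: "(\<forall>s'. length s' = mB \<longrightarrow> (s' \<in> TB \<and> P s' \<longrightarrow> R s')) \<longleftrightarrow> (\<forall>s'\<in>TB. P s' \<longrightarrow> R s')"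
  using lenTB by blast

lemma inner: assumes ls: "length s = mB" and ls': "length s' = mB" and CG: "C \<subseteq> GG" and sT: "s \<in> TB"
  shows "(\<exists>w. length w = n+n \<and> (take n w \<in> H \<and> s' @ take n w \<in> fam TB B \<and> drop n w \<in> C \<and>
      (\<exists>z. length z = n \<and> (take n w @ drop n w @ z \<in> Mult \<and> s @ z \<in> fam TB B))))
    \<longleftrightarrow> s' \<in> TB \<and> (\<exists>h'\<in>H. h' \<in> B s' \<and> (\<exists>c\<in>C. h' \<otimes>\<^bsub>G\<^esub> c \<in> B s))"
proof
  assume "\<exists>w. length w = n+n \<and> (take n w \<in> H \<and> s' @ take n w \<in> fam TB B \<and> drop n w \<in> C \<and>
      (\<exists>z. length z = n \<and> (take n w @ drop n w @ z \<in> Mult \<and> s @ z \<in> fam TB B)))"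
  then obtain w z where w: "length w = n+n" "take n w \<in> H" "s' @ take n w \<in> fam TB B" "drop n w \<in> C"
    "length z = n" "take n w @ drop n w @ z \<in> Mult" "s @ z \<in> fam TB B" by blast
  have "z = take n w \<otimes>\<^bsub>G\<^esub> drop n w" using mult_mem[of "take n w" "drop n w" z] w by simp
  then show "s' \<in> TB \<and> (\<exists>h'\<in>H. h' \<in> B s' \<and> (\<exists>c\<in>C. h' \<otimes>\<^bsub>G\<^esub> c \<in> B s))"
    using w fam_mem[OF Bfam ls] fam_mem[OF Bfam ls'] by blast
next
  assume "s' \<in> TB \<and> (\<exists>h'\<in>H. h' \<in> B s' \<and> (\<exists>c\<in>C. h' \<otimes>\<^bsub>G\<^esub> c \<in> B s))"
  then obtain h' c where hc: "h' \<in> H" "h' \<in> B s'" "c \<in> C" "h' \<otimes>\<^bsub>G\<^esub> c \<in> B s" "s' \<in> TB" by blast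
  have hG: "h' \<in> GG" using hc HG by blast
  have cG: "c \<in> GG" using hc CG by blast
  have l: "length h' = n" "length c = n" "length (h' \<otimes>\<^bsub>G\<^esub> c) = n" using lenG hG cG by auto
  have "h' @ c @ (h' \<otimes>\<^bsub>G\<^esub> c) \<in> Mult" using mult_mem[OF l(1,2)] hG cG by blast
  then show "\<exists>w. length w = n+n \<and> (take n w \<in> H \<and> s' @ take n w \<in> fam TB B \<and> drop n w \<in> C \<and>
      (\<exists>z. length z = n \<and> (take n w @ drop n w @ z \<in> Mult \<and> s @ z \<in> fam TB B)))"
    using hc l sT fam_mem[OF Bfam ls] fam_mem[OF Bfam ls']
    by (intro exI[of _ "h' @ c"]) (auto intro!: exI[of _ "h' \<otimes>\<^bsub>G\<^esub> c"])
qed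

lemma KD: assumes x: "length x = n" and CD: "C \<in> D n" and CG: "C \<subseteq> GG"
  shows "def_family D mB n {s \<in> TB. x \<in> B s}
     (\<lambda>s. {h \<in> H. \<forall>s'\<in>TB. h \<in> B s' \<longrightarrow> (\<exists>h'\<in>H. h' \<in> B s' \<and> (\<exists>c\<in>C. h' \<otimes>\<^bsub>G\<^esub> c \<in> B s))})"
proof -
  let ?Sx = "{s \<in> TB. x \<in> B s}"
  let ?K = "(\<lambda>s. {h \<in> H. \<forall>s'\<in>TB. h \<in> B s' \<longrightarrow> (\<exists>h'\<in>H. h' \<in> B s' \<and> (\<exists>c\<in>C. h' \<otimes>\<^bsub>G\<^esub> c \<in> B s))})"
  have FD: "fam TB B \<in> D (mB + n)" by (rule famD[OF Bfam])
  have i1: "defbl D (mB+n+mB+(n+n)+n) (\<lambda>zs. take n (drop (mB+n+mB) zs) @ take n (drop (mB+n+mB+n) zs) @ drop (mB+n+mB+n+n) zs \<in> Mult)"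
    by (rule dbl(1)[OF MultD, where idx="[mB+n+mB..<mB+n+mB+n] @ [mB+n+mB+n..<mB+n+mB+n+n] @ [mB+n+mB+n+n..<mB+n+mB+n+n+n]"]) (auto simp: mnu)
  have i2: "defbl D (mB+n+mB+(n+n)+n) (\<lambda>zs. take mB zs @ drop (mB+n+mB+n+n) zs \<in> fam TB B)"
    by (rule dbl(1)[OF FD, where idx="[0..<mB] @ [mB+n+mB+n+n..<mB+n+mB+n+n+n]"]) (auto simp: mnu)
  have Z: "defbl D (mB+n+mB+(n+n)) (\<lambda>ys. \<exists>z. length z = n \<and> (take n (drop (mB+n+mB) (ys@z)) @ take n (drop (mB+n+mB+n) (ys@z)) @ drop (mB+n+mB+n+n) (ys@z) \<in> Mult
      \<and> take mB (ys@z) @ drop (mB+n+mB+n+n) (ys@z) \<in> fam TB B))"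
    by (intro dbl(3) dbl(2) i1 i2)
  have w1: "defbl D (mB+n+mB+(n+n)) (\<lambda>ys. take n (drop (mB+n+mB) ys) \<in> H)"
    by (rule dbl(1)[OF HD, where idx="[mB+n+mB..<mB+n+mB+n]"]) (auto simp: mnu)
  have w2: "defbl D (mB+n+mB+(n+n)) (\<lambda>ys. take mB (drop (mB+n) ys) @ take n (drop (mB+n+mB) ys) \<in> fam TB B)"
    by (rule dbl(1)[OF FD, where idx="[mB+n..<mB+n+mB] @ [mB+n+mB..<mB+n+mB+n]"]) (auto simp: mnu)
  have w3: "defbl D (mB+n+mB+(n+n)) (\<lambda>ys. drop (mB+n+mB+n) ys \<in> C)"
    by (rule dbl(1)[OF CD, where idx="[mB+n+mB+n..<mB+n+mB+n+n]"]) (auto simp: mnu)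
  have W: "defbl D (mB+n+mB) (\<lambda>us. \<exists>w. length w = n+n \<and> (take n (drop (mB+n+mB) (us@w)) \<in> H \<and>
      take mB (drop (mB+n) (us@w)) @ take n (drop (mB+n+mB) (us@w)) \<in> fam TB B \<and> drop (mB+n+mB+n) (us@w) \<in> C \<and>
      (\<exists>z. length z = n \<and> (take n (drop (mB+n+mB) ((us@w)@z)) @ take n (drop (mB+n+mB+n) ((us@w)@z)) @ drop (mB+n+mB+n+n) ((us@w)@z) \<in> Mult
      \<and> take mB ((us@w)@z) @ drop (mB+n+mB+n+n) ((us@w)@z) \<in> fam TB B))))"
    by (intro dbl(3) dbl(2) w1 w2 w3 Z)
  have u1: "defbl D (mB+n+mB) (\<lambda>us. drop (mB+n) us @ take n (drop mB us) \<in> fam TB B)"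
    by (rule dbl(1)[OF FD, where idx="[mB+n..<mB+n+mB] @ [mB..<mB+n]"]) (auto simp: mnu)
  have U: "defbl D (mB+n) (\<lambda>xs. \<forall>s'. length s' = mB \<longrightarrow> (drop (mB+n) (xs@s') @ take n (drop mB (xs@s')) \<in> fam TB B \<longrightarrow>
      (\<exists>w. length w = n+n \<and> (take n (drop (mB+n+mB) ((xs@s')@w)) \<in> H \<and>
      take mB (drop (mB+n) ((xs@s')@w)) @ take n (drop (mB+n+mB) ((xs@s')@w)) \<in> fam TB B \<and> drop (mB+n+mB+n) ((xs@s')@w) \<in> C \<and>
      (\<exists>z. length z = n \<and> (take n (drop (mB+n+mB) (((xs@s')@w)@z)) @ take n (drop (mB+n+mB+n) (((xs@s')@w)@z)) @ drop (mB+n+mB+n+n) (((xs@s')@w)@z) \<in> Mult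
      \<and> take mB (((xs@s')@w)@z) @ drop (mB+n+mB+n+n) (((xs@s')@w)@z) \<in> fam TB B))))))"
    by (intro dbl(4) dbl(6) u1 W)
  have x1: "defbl D (mB+n) (\<lambda>xs. take mB xs \<in> ?Sx)"
    by (rule dbl(1)[OF SxD[OF x], where idx="[0..<mB]"]) (auto simp: mnu)
  have x2: "defbl D (mB+n) (\<lambda>xs. drop mB xs \<in> H)"
    by (rule dbl(1)[OF HD, where idx="[mB..<mB+n]"]) (auto simp: mnu)
  have X: "defbl D (mB+n) (\<lambda>xs. take mB xs \<in> ?Sx \<and> drop mB xs \<in> H \<and> (\<forall>s'. length s' = mB \<longrightarrow> (drop (mB+n) (xs@s') @ take n (drop mB (xs@s')) \<in> fam TB B \<longrightarrow>
      (\<exists>w. length w = n+n \<and> (take n (drop (mB+n+mB) ((xs@s')@w)) \<in> H \<and>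
      take mB (drop (mB+n) ((xs@s')@w)) @ take n (drop (mB+n+mB) ((xs@s')@w)) \<in> fam TB B \<and> drop (mB+n+mB+n) ((xs@s')@w) \<in> C \<and>
      (\<exists>z. length z = n \<and> (take n (drop (mB+n+mB) (((xs@s')@w)@z)) @ take n (drop (mB+n+mB+n) (((xs@s')@w)@z)) @ drop (mB+n+mB+n+n) (((xs@s')@w)@z) \<in> Mult
      \<and> take mB (((xs@s')@w)@z) @ drop (mB+n+mB+n+n) (((xs@s')@w)@z) \<in> fam TB B)))))))"
    by (intro dbl(2) x1 x2 U)
  have X2: "defbl D (mB+n) (\<lambda>xs. take mB xs \<in> ?Sx \<and> drop mB xs \<in> H \<and> (\<forall>s'. length s' = mB \<longrightarrow> (s' @ drop mB xs \<in> fam TB B \<longrightarrow>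
      (\<exists>w. length w = n+n \<and> (take n w \<in> H \<and> s' @ take n w \<in> fam TB B \<and> drop n w \<in> C \<and>
      (\<exists>z. length z = n \<and> (take n w @ drop n w @ z \<in> Mult \<and> take mB xs @ z \<in> fam TB B)))))))"
    using X by (rule defbl_cong[OF SD]) (simp cong: conj_cong)
  then have D1: "{xs. length xs = mB+n \<and> (take mB xs \<in> ?Sx \<and> drop mB xs \<in> H \<and> (\<forall>s'. length s' = mB \<longrightarrow> (s' @ drop mB xs \<in> fam TB B \<longrightarrow>
      (\<exists>w. length w = n+n \<and> (take n w \<in> H \<and> s' @ take n w \<in> fam TB B \<and> drop n w \<in> C \<and>
      (\<exists>z. length z = n \<and> (take n w @ drop n w @ z \<in> Mult \<and> take mB xs @ z \<in> fam TB B)))))))} \<in> D (mB+n)"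
    by (rule defbl_D[OF SD])
  have eq: "(take mB xs \<in> ?Sx \<and> drop mB xs \<in> H \<and> (\<forall>s'. length s' = mB \<longrightarrow> (s' @ drop mB xs \<in> fam TB B \<longrightarrow>
      (\<exists>w. length w = n+n \<and> (take n w \<in> H \<and> s' @ take n w \<in> fam TB B \<and> drop n w \<in> C \<and>
      (\<exists>z. length z = n \<and> (take n w @ drop n w @ z \<in> Mult \<and> take mB xs @ z \<in> fam TB B))))))) \<longleftrightarrow>
      take mB xs \<in> ?Sx \<and> drop mB xs \<in> ?K (take mB xs)" if lx: "length xs = mB + n" for xs
  proof (cases "take mB xs \<in> ?Sx")
    case False then show ?thesis by blast
  next
    case True
    then have sT: "take mB xs \<in> TB" by simp
    have ls: "length (take mB xs) = mB" using lx by simp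
    have A: "(s' @ drop mB xs \<in> fam TB B \<longrightarrow>
      (\<exists>w. length w = n+n \<and> (take n w \<in> H \<and> s' @ take n w \<in> fam TB B \<and> drop n w \<in> C \<and>
      (\<exists>z. length z = n \<and> (take n w @ drop n w @ z \<in> Mult \<and> take mB xs @ z \<in> fam TB B))))) \<longleftrightarrow>
      (s' \<in> TB \<and> drop mB xs \<in> B s' \<longrightarrow>
      (\<exists>h'\<in>H. h' \<in> B s' \<and> (\<exists>c\<in>C. h' \<otimes>\<^bsub>G\<^esub> c \<in> B (take mB xs))))"
      if l: "length s' = mB" for s'
    proof -
      note i = inner[OF ls l CG sT]
      note f = fam_mem[OF Bfam l, of "drop mB xs"]
      show ?thesis by (simp only: i f) blast
    qed
    have E1: "(\<forall>s'. length s' = mB \<longrightarrow> (s' @ drop mB xs \<in> fam TB B \<longrightarrow>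
      (\<exists>w. length w = n+n \<and> (take n w \<in> H \<and> s' @ take n w \<in> fam TB B \<and> drop n w \<in> C \<and>
      (\<exists>z. length z = n \<and> (take n w @ drop n w @ z \<in> Mult \<and> take mB xs @ z \<in> fam TB B)))))) \<longleftrightarrow>
      (\<forall>s'\<in>TB. drop mB xs \<in> B s' \<longrightarrow>
      (\<exists>h'\<in>H. h' \<in> B s' \<and> (\<exists>c\<in>C. h' \<otimes>\<^bsub>G\<^esub> c \<in> B (take mB xs))))"
      by (subst all_cong_len[OF A], assumption) (rule allTB)
    show ?thesis unfolding E1 by simp
  qed
  have "fam ?Sx ?K = {xs. length xs = mB+n \<and> (take mB xs \<in> ?Sx \<and> drop mB xs \<in> H \<and> (\<forall>s'. length s' = mB \<longrightarrow> (s' @ drop mB xs \<in> fam TB B \<longrightarrow>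
      (\<exists>w. length w = n+n \<and> (take n w \<in> H \<and> s' @ take n w \<in> fam TB B \<and> drop n w \<in> C \<and>
      (\<exists>z. length z = n \<and> (take n w @ drop n w @ z \<in> Mult \<and> take mB xs @ z \<in> fam TB B)))))))}"
  proof (intro Set.set_eqI iffI)
    fix xs assume "xs \<in> fam ?Sx ?K"
    then obtain s h where sh: "xs = s @ h" "s \<in> ?Sx" "h \<in> ?K s" unfolding fam_def by blast
    have l1: "length s = mB" using sh lenTB by blast
    have l2: "length h = n" using sh HG lenG by blast
    show "xs \<in> {xs. length xs = mB+n \<and> (take mB xs \<in> ?Sx \<and> drop mB xs \<in> H \<and> (\<forall>s'. length s' = mB \<longrightarrow> (s' @ drop mB xs \<in> fam TB B \<longrightarrow>
      (\<exists>w. length w = n+n \<and> (take n w \<in> H \<and> s' @ take n w \<in> fam TB B \<and> drop n w \<in> C \<and>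
      (\<exists>z. length z = n \<and> (take n w @ drop n w @ z \<in> Mult \<and> take mB xs @ z \<in> fam TB B)))))))}"
    proof -
      have lx: "length xs = mB + n" using sh l1 l2 by simp
      have "take mB xs \<in> ?Sx \<and> drop mB xs \<in> ?K (take mB xs)" using sh l1 l2 by simp
      then have P: "take mB xs \<in> ?Sx \<and> drop mB xs \<in> H \<and> (\<forall>s'. length s' = mB \<longrightarrow> (s' @ drop mB xs \<in> fam TB B \<longrightarrow>
      (\<exists>w. length w = n+n \<and> (take n w \<in> H \<and> s' @ take n w \<in> fam TB B \<and> drop n w \<in> C \<and>
      (\<exists>z. length z = n \<and> (take n w @ drop n w @ z \<in> Mult \<and> take mB xs @ z \<in> fam TB B))))))" by (rule iffD2[OF eq[OF lx]])
      show ?thesis by (rule CollectI, rule conjI[OF lx P])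
    qed
  next
    fix xs assume a: "xs \<in> {xs. length xs = mB+n \<and> (take mB xs \<in> ?Sx \<and> drop mB xs \<in> H \<and> (\<forall>s'. length s' = mB \<longrightarrow> (s' @ drop mB xs \<in> fam TB B \<longrightarrow>
      (\<exists>w. length w = n+n \<and> (take n w \<in> H \<and> s' @ take n w \<in> fam TB B \<and> drop n w \<in> C \<and>
      (\<exists>z. length z = n \<and> (take n w @ drop n w @ z \<in> Mult \<and> take mB xs @ z \<in> fam TB B)))))))}"
    then have lx: "length xs = mB + n" by simp
    have P: "take mB xs \<in> ?Sx \<and> drop mB xs \<in> H \<and> (\<forall>s'. length s' = mB \<longrightarrow> (s' @ drop mB xs \<in> fam TB B \<longrightarrow>
      (\<exists>w. length w = n+n \<and> (take n w \<in> H \<and> s' @ take n w \<in> fam TB B \<and> drop n w \<in> C \<and>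
      (\<exists>z. length z = n \<and> (take n w @ drop n w @ z \<in> Mult \<and> take mB xs @ z \<in> fam TB B))))))" by (rule conjunct2[OF CollectD[OF a]])
    have "take mB xs \<in> ?Sx \<and> drop mB xs \<in> ?K (take mB xs)" by (rule iffD1[OF eq[OF lx] P])
    moreover have "xs = take mB xs @ drop mB xs" by simp
    ultimately show "xs \<in> fam ?Sx ?K" unfolding fam_def by blast
  qed
  then have "fam ?Sx ?K \<in> D (mB + n)" using D1 by simp
  moreover have "\<forall>s\<in>?Sx. ?K s \<subseteq> Mn n" using HG lenG by auto
  ultimately show ?thesis using SxD[OF x] by (intro famI)
qed

end

context S5 begin

lemma HC_closed: assumes C: "closedin \<tau> C" and CD: "C \<in> D n"
  shows "closedin \<tau> {g \<in> GG. \<exists>h\<in>H. \<exists>c\<in>C. g = h \<otimes>\<^bsub>G\<^esub> c}"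
proof -
  let ?HC = "{g \<in> GG. \<exists>h\<in>H. \<exists>c\<in>C. g = h \<otimes>\<^bsub>G\<^esub> c}"
  have CG: "C \<subseteq> GG" using closedin_subset C topG by metis
  have "openin \<tau> (GG - ?HC)"
  proof (subst openin_subopen, intro ballI)
    fix x assume xin: "x \<in> GG - ?HC"
    show "\<exists>U. openin \<tau> U \<and> x \<in> U \<and> U \<subseteq> GG - ?HC"
    proof (rule ccontr)
      assume nU: "\<not> (\<exists>U. openin \<tau> U \<and> x \<in> U \<and> U \<subseteq> GG - ?HC)"
      have xG: "x \<in> GG" and xn: "x \<notin> ?HC" using xin by auto
      have lx: "length x = n" using lenG xG by blast
      define Sx where "Sx = {s \<in> TB. x \<in> B s}"
      define K where "K = (\<lambda>s. {h \<in> H. \<forall>s'\<in>TB. h \<in> B s' \<longrightarrow> (\<exists>h'\<in>H. h' \<in> B s' \<and> (\<exists>c\<in>C. h' \<otimes>\<^bsub>G\<^esub> c \<in> B s))})"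
      have nb: "\<exists>h\<in>H. \<exists>c\<in>C. h \<otimes>\<^bsub>G\<^esub> c \<in> B s" if s: "s \<in> Sx" for s
      proof (rule ccontr)
        assume a: "\<not> (\<exists>h\<in>H. \<exists>c\<in>C. h \<otimes>\<^bsub>G\<^esub> c \<in> B s)"
        have sT: "s \<in> TB" "x \<in> B s" using s unfolding Sx_def by auto
        have "B s \<subseteq> GG - ?HC" using Bsub[OF sT(1)] a by blast
        then show False using nU Bopen sT by blast
      qed
      have fam: "def_family D mB n Sx K" unfolding Sx_def K_def by (rule KD[OF lx CD CG])
      have ne: "Sx \<noteq> {}"
      proof -
        have "openin \<tau> GG" using topG by (metis openin_topspace)
        then obtain t where "t \<in> TB" "x \<in> B t" using Bbase xG by meson
        then show ?thesis unfolding Sx_def by blast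
      qed
      have cl: "\<forall>s\<in>Sx. closedin (subtopology \<tau> H) (K s) \<and> K s \<noteq> {}"
      proof
        fix s assume s: "s \<in> Sx"
        obtain h c where hc: "h \<in> H" "c \<in> C" "h \<otimes>\<^bsub>G\<^esub> c \<in> B s" using nb[OF s] by blast
        have "h \<in> K s" unfolding K_def using hc by blast
        moreover have "closedin (subtopology \<tau> H) (K s)"
        proof -
          let ?T = "\<Union>{B s' | s'. s' \<in> TB \<and> \<not> (\<exists>h'\<in>H. h' \<in> B s' \<and> (\<exists>c\<in>C. h' \<otimes>\<^bsub>G\<^esub> c \<in> B s))}"
          have "openin \<tau> ?T" using Bopen by (intro openin_Union) auto
          moreover have "topspace (subtopology \<tau> H) - K s = ?T \<inter> H"
          proof -
            have "topspace (subtopology \<tau> H) = H" using HG topG by auto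
            moreover have "H - K s = ?T \<inter> H" unfolding K_def using HG Bsub by blast
            ultimately show ?thesis by simp
          qed
          ultimately have "openin (subtopology \<tau> H) (topspace (subtopology \<tau> H) - K s)"
            unfolding openin_subtopology by blast
          moreover have "K s \<subseteq> topspace (subtopology \<tau> H)" unfolding K_def using HG topG by auto
          ultimately show ?thesis unfolding closedin_def by blast
        qed
        ultimately show "closedin (subtopology \<tau> H) (K s) \<and> K s \<noteq> {}" by blast
      qed
      have filt: "\<forall>s1\<in>Sx. \<forall>s2\<in>Sx. \<exists>s3\<in>Sx. K s3 \<subseteq> K s1 \<inter> K s2"
      proof (intro ballI)
        fix s1 s2 assume s1: "s1 \<in> Sx" and s2: "s2 \<in> Sx"
        have "openin \<tau> (B s1 \<inter> B s2)" using Bopen s1 s2 unfolding Sx_def by auto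
        moreover have "x \<in> B s1 \<inter> B s2" using s1 s2 unfolding Sx_def by auto
        ultimately obtain s3 where s3: "s3 \<in> TB" "x \<in> B s3" "B s3 \<subseteq> B s1 \<inter> B s2" using Bbase by meson
        have "K s3 \<subseteq> K s1 \<inter> K s2" unfolding K_def using s3(3) by blast
        then show "\<exists>s3\<in>Sx. K s3 \<subseteq> K s1 \<inter> K s2" using s3 unfolding Sx_def by blast
      qed
      have "(\<Inter>s\<in>Sx. K s) \<noteq> {}"
        using cH unfolding def_compact_def
        apply (elim allE[of _ mB] allE[of _ Sx] allE[of _ K])
        using fam ne cl filt by blast
      then obtain h0 where h0: "\<forall>s\<in>Sx. h0 \<in> K s" by blast
      obtain s0 where s0: "s0 \<in> Sx" using ne by blast
      have h0H: "h0 \<in> H" using h0 s0 unfolding K_def by blast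
      have h0G: "h0 \<in> GG" using h0H HG by blast
      let ?y = "inv\<^bsub>G\<^esub> h0 \<otimes>\<^bsub>G\<^esub> x"
      have yG: "?y \<in> GG" using h0G xG by simp
      have yC: "?y \<in> C"
      proof (rule ccontr)
        assume yn: "?y \<notin> C"
        have oc: "openin \<tau> (GG - C)" using C topG unfolding closedin_def by metis
        let ?P = "{p \<in> topspace (prod_topology \<tau> \<tau>). (\<lambda>(h, z). inv\<^bsub>G\<^esub> h \<otimes>\<^bsub>G\<^esub> z) p \<in> GG - C}"
        have "openin (prod_topology \<tau> \<tau>) ?P" using openin_continuous_map_preimage[OF f2_cont oc] .
        moreover have "(h0, x) \<in> ?P" using h0G xG yG yn topG by simp
        ultimately obtain N V where NV: "openin \<tau> N" "openin \<tau> V" "h0 \<in> N" "x \<in> V" "N \<times> V \<subseteq> ?P"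
          unfolding openin_prod_topology_alt by meson
        obtain s where s: "s \<in> TB" "x \<in> B s" "B s \<subseteq> V" using Bbase NV by meson
        have sS: "s \<in> Sx" unfolding Sx_def using s by blast
        obtain s' where s': "s' \<in> TB" "h0 \<in> B s'" "B s' \<subseteq> N" using Bbase NV by meson
        have "h0 \<in> K s" using h0 sS by blast
        then obtain h' c where hc: "h' \<in> H" "h' \<in> B s'" "c \<in> C" "h' \<otimes>\<^bsub>G\<^esub> c \<in> B s"
          using s' unfolding K_def by blast
        then have "(h', h' \<otimes>\<^bsub>G\<^esub> c) \<in> ?P" using NV s s' by blast
        then have "inv\<^bsub>G\<^esub> h' \<otimes>\<^bsub>G\<^esub> (h' \<otimes>\<^bsub>G\<^esub> c) \<in> GG - C" by simp
        moreover have "inv\<^bsub>G\<^esub> h' \<otimes>\<^bsub>G\<^esub> (h' \<otimes>\<^bsub>G\<^esub> c) = c" 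
        proof -
          have "h' \<in> GG" "c \<in> GG" using hc HG CG by auto
          then show ?thesis by (simp add: G.m_assoc[symmetric])
        qed
        ultimately show False using hc by simp
      qed
      have "x = h0 \<otimes>\<^bsub>G\<^esub> ?y" using h0G xG by (simp add: G.m_assoc[symmetric])
      then have "x \<in> ?HC" using h0H yC xG by blast
      then show False using xn by blast
    qed
  qed
  moreover have "?HC \<subseteq> topspace \<tau>" using topG by blast
  ultimately show ?thesis unfolding closedin_def topG by blast
qed

end

context S5 begin

lemma KHD: assumes f: "def_family D m n T C" and a: "a \<in> GG" and CG: "\<forall>t\<in>T. C t \<subseteq> GG"
  shows "def_family D m n T (\<lambda>t. {h \<in> H. h \<otimes>\<^bsub>G\<^esub> a \<in> C t})"
proof -
  have la: "length a = n" using lenG a by blast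
  have FD: "fam T C \<in> D (m + n)" by (rule famD[OF f])
  have j1: "defbl D (m+n+(n+n)) (\<lambda>zs. take n (drop (m+n) zs) \<in> {a})"
    by (rule dbl(1)[OF constD[of a, unfolded la], where idx="[m+n..<m+n+n]"]) (auto simp: mnu)
  have j2: "defbl D (m+n+(n+n)) (\<lambda>zs. take n (drop m zs) @ drop (m+n) zs \<in> Mult)"
    by (rule dbl(1)[OF MultD, where idx="[m..<m+n] @ [m+n..<m+n+n+n]"]) (auto simp: mnu)
  have j3: "defbl D (m+n+(n+n)) (\<lambda>zs. take m zs @ drop (m+n+n) zs \<in> fam T C)"
    by (rule dbl(1)[OF FD, where idx="[0..<m] @ [m+n+n..<m+n+n+n]"]) (auto simp: mnu)
  have j4: "defbl D (m+n) (\<lambda>xs. drop m xs \<in> H)"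
    by (rule dbl(1)[OF HD, where idx="[m..<m+n]"]) (auto simp: mnu)
  have "defbl D (m+n) (\<lambda>xs. drop m xs \<in> H \<and> (\<exists>yz. length yz = n+n \<and> (take n (drop (m+n) (xs@yz)) \<in> {a} \<and>
     take n (drop m (xs@yz)) @ drop (m+n) (xs@yz) \<in> Mult \<and> take m (xs@yz) @ drop (m+n+n) (xs@yz) \<in> fam T C)))"
    by (intro dbl(2) j4 dbl(3) j1 j2 j3)
  then have "defbl D (m+n) (\<lambda>xs. drop m xs \<in> H \<and> (\<exists>yz. length yz = n+n \<and> (take n yz \<in> {a} \<and>
     drop m xs @ yz \<in> Mult \<and> take m xs @ drop n yz \<in> fam T C)))"
    by (rule defbl_cong[OF SD]) (simp cong: conj_cong)
  then have D1: "{xs. length xs = m+n \<and> (drop m xs \<in> H \<and> (\<exists>yz. length yz = n+n \<and> (take n yz \<in> {a} \<and>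
     drop m xs @ yz \<in> Mult \<and> take m xs @ drop n yz \<in> fam T C)))} \<in> D (m+n)"
    by (rule defbl_D[OF SD])
  have "fam T (\<lambda>t. {h \<in> H. h \<otimes>\<^bsub>G\<^esub> a \<in> C t}) = {xs. length xs = m+n \<and> (drop m xs \<in> H \<and> (\<exists>yz. length yz = n+n \<and> (take n yz \<in> {a} \<and>
     drop m xs @ yz \<in> Mult \<and> take m xs @ drop n yz \<in> fam T C)))}"
  proof (intro Set.set_eqI iffI)
    fix xs assume "xs \<in> fam T (\<lambda>t. {h \<in> H. h \<otimes>\<^bsub>G\<^esub> a \<in> C t})"
    then obtain t h where th: "xs = t @ h" "t \<in> T" "h \<in> H" "h \<otimes>\<^bsub>G\<^esub> a \<in> C t" unfolding fam_def by blast
    have lt: "length t = m" using famT[OF f th(2)] .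
    have hG: "h \<in> GG" using th HG by blast
    have lh: "length h = n" using lenG hG by blast
    have lha: "length (h \<otimes>\<^bsub>G\<^esub> a) = n" using lenG hG a by simp
    have m1: "h @ a @ (h \<otimes>\<^bsub>G\<^esub> a) \<in> Mult" using mult_mem[OF lh la] hG a by blast
    have m2: "t @ (h \<otimes>\<^bsub>G\<^esub> a) \<in> fam T C" using fam_mem[OF f lt] th by blast
    show "xs \<in> {xs. length xs = m+n \<and> (drop m xs \<in> H \<and> (\<exists>yz. length yz = n+n \<and> (take n yz \<in> {a} \<and>
     drop m xs @ yz \<in> Mult \<and> take m xs @ drop n yz \<in> fam T C)))}"
      using th lt lh lha la m1 m2 by (auto intro!: exI[of _ "a @ (h \<otimes>\<^bsub>G\<^esub> a)"])
  next
    fix xs assume "xs \<in> {xs. length xs = m+n \<and> (drop m xs \<in> H \<and> (\<exists>yz. length yz = n+n \<and> (take n yz \<in> {a} \<and>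
     drop m xs @ yz \<in> Mult \<and> take m xs @ drop n yz \<in> fam T C)))}"
    then obtain yz where y: "length xs = m+n" "drop m xs \<in> H" "length yz = n+n" "take n yz = a"
      "drop m xs @ yz \<in> Mult" "take m xs @ drop n yz \<in> fam T C" by auto
    have "yz = a @ drop n yz" using y(4) by (metis append_take_drop_id)
    then have "drop m xs @ a @ drop n yz \<in> Mult" using y(5) by metis
    then have e: "drop n yz = drop m xs \<otimes>\<^bsub>G\<^esub> a" using mult_mem[of "drop m xs" a] la y(1) by simp
    have "take m xs \<in> T \<and> drop n yz \<in> C (take m xs)" using fam_mem[OF f, of "take m xs"] y(1,6) by simp
    then have "take m xs \<in> T \<and> drop m xs \<in> {h \<in> H. h \<otimes>\<^bsub>G\<^esub> a \<in> C (take m xs)}" using e y(2) by simp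
    moreover have "xs = take m xs @ drop m xs" by simp
    ultimately show "xs \<in> fam T (\<lambda>t. {h \<in> H. h \<otimes>\<^bsub>G\<^esub> a \<in> C t})" unfolding fam_def by blast
  qed
  then have "fam T (\<lambda>t. {h \<in> H. h \<otimes>\<^bsub>G\<^esub> a \<in> C t}) \<in> D (m + n)" using D1 by simp
  moreover have "T \<in> D m" using f unfolding def_family_def by blast
  moreover have "\<forall>t\<in>T. {h \<in> H. h \<otimes>\<^bsub>G\<^esub> a \<in> C t} \<subseteq> Mn n" using HG lenG by auto
  ultimately show ?thesis by (intro famI)
qed

lemma main: "def_compact D n \<tau>"
  unfolding def_compact_def
proof (intro allI impI)
  fix m T C
  assume asm: "def_family D m n T C \<and> T \<noteq> {} \<and> (\<forall>t\<in>T. closedin \<tau> (C t) \<and> C t \<noteq> {}) \<and>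
        (\<forall>s\<in>T. \<forall>t\<in>T. \<exists>u\<in>T. C u \<subseteq> C s \<inter> C t)"
  then have f: "def_family D m n T C" and Tne: "T \<noteq> {}" and Ccl: "\<forall>t\<in>T. closedin \<tau> (C t) \<and> C t \<noteq> {}"
    and Cf: "\<forall>s\<in>T. \<forall>t\<in>T. \<exists>u\<in>T. C u \<subseteq> C s \<inter> C t" by auto
  have CG: "\<forall>t\<in>T. C t \<subseteq> GG" using Ccl closedin_subset topG by metis
  have CtD: "t \<in> T \<Longrightarrow> C t \<in> D n" for t using fiber_D[OF f] .
  have fQ: "def_family D m k T (\<lambda>t. \<pi> ` C t)" using image_fam[OF f CG] .
  have clQ: "closedin \<tau>Q (\<pi> ` C t)" if t: "t \<in> T" for t
  proof (rule tF_closed)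
    let ?HC = "{g \<in> GG. \<exists>h\<in>H. \<exists>c\<in>C t. g = h \<otimes>\<^bsub>G\<^esub> c}"
    have hc: "closedin \<tau> ?HC" using HC_closed Ccl t CtD[OF t] by blast
    have "openin \<tau> (GG - ?HC)" using hc topG unfolding closedin_def by metis
    moreover have "{g \<in> GG. \<pi> g \<in> Q - \<pi> ` C t} = GG - ?HC"
    proof -
      have "g \<in> GG \<Longrightarrow> \<pi> g \<in> \<pi> ` C t \<longleftrightarrow> g \<in> ?HC" for g using img_iff[of "C t" g] CG t by blast
      then show ?thesis using pi_Q by blast
    qed
    ultimately have "openin tF (Q - \<pi> ` C t)" unfolding tF_open by auto
    moreover have "\<pi> ` C t \<subseteq> Q" using pi_Q CG t by blast
    ultimately show "closedin tF (\<pi> ` C t)" unfolding closedin_def tF_top by blast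
  qed
  have "(\<Inter>t\<in>T. \<pi> ` C t) \<noteq> {}"
    using cQ unfolding def_compact_def
    apply (elim allE[of _ m] allE[of _ T] allE[of _ "\<lambda>t. \<pi> ` C t"])
    apply (erule mp)
    using fQ Tne clQ Ccl Cf by (auto simp: image_mono) (meson image_mono le_inf_iff)
  then obtain q where q: "\<forall>t\<in>T. q \<in> \<pi> ` C t" by blast
  obtain t0 where t0: "t0 \<in> T" using Tne by blast
  obtain a where a: "a \<in> C t0" "q = \<pi> a" using q t0 by blast
  have aG: "a \<in> GG" using a CG t0 by blast
  let ?K = "\<lambda>t. {h \<in> H. h \<otimes>\<^bsub>G\<^esub> a \<in> C t}"
  have fK: "def_family D m n T ?K" using KHD[OF f aG CG] .
  have clK: "\<forall>t\<in>T. closedin (subtopology \<tau> H) (?K t) \<and> ?K t \<noteq> {}"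
  proof
    fix t assume t: "t \<in> T"
    have "closedin \<tau> {x \<in> topspace \<tau>. x \<otimes>\<^bsub>G\<^esub> a \<in> C t}"
      using closedin_continuous_map_preimage[OF rmul_cont[OF aG]] Ccl t by blast
    moreover have "?K t = {x \<in> topspace \<tau>. x \<otimes>\<^bsub>G\<^esub> a \<in> C t} \<inter> H" using HG topG by auto
    ultimately have "closedin (subtopology \<tau> H) (?K t)" unfolding closedin_subtopology by blast
    moreover have "?K t \<noteq> {}"
    proof -
      obtain c where c: "c \<in> C t" "\<pi> c = \<pi> a" using q t a by auto
      have cG: "c \<in> GG" using c CG t by blast
      have "c \<otimes>\<^bsub>G\<^esub> inv\<^bsub>G\<^esub> a \<in> H" using pi_fib[OF aG cG c(2)] .
      moreover have "(c \<otimes>\<^bsub>G\<^esub> inv\<^bsub>G\<^esub> a) \<otimes>\<^bsub>G\<^esub> a = c" using cG aG by (simp add: G.m_assoc)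
      ultimately show ?thesis using c by auto
    qed
    ultimately show "closedin (subtopology \<tau> H) (?K t) \<and> ?K t \<noteq> {}" by blast
  qed
  have filtK: "\<forall>s\<in>T. \<forall>t\<in>T. \<exists>u\<in>T. ?K u \<subseteq> ?K s \<inter> ?K t"
  proof (intro ballI)
    fix s t assume "s \<in> T" "t \<in> T"
    then obtain u where "u \<in> T" "C u \<subseteq> C s \<inter> C t" using Cf by blast
    then show "\<exists>u\<in>T. ?K u \<subseteq> ?K s \<inter> ?K t" by blast
  qed
  have "(\<Inter>t\<in>T. ?K t) \<noteq> {}"
    using cH unfolding def_compact_def
    apply (elim allE[of _ m] allE[of _ T] allE[of _ ?K])
    apply (erule mp)
    using fK Tne clK filtK by blast
  then obtain h0 where "\<forall>t\<in>T. h0 \<in> ?K t" by blast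
  then have "\<forall>t\<in>T. h0 \<otimes>\<^bsub>G\<^esub> a \<in> C t" by blast
  then show "(\<Inter>t\<in>T. C t) \<noteq> {}" by blast
qed

end

theorem theorem5p7:
  fixes D :: "nat \<Rightarrow> ('a::linordered_ab_group_add) list set set"
    and G :: "'a list monoid" and \<tau> :: "'a list topology" and H :: "'a list set"
    and \<tau>Q :: "'a list topology" and \<pi> :: "'a list \<Rightarrow> 'a list"
  assumes "dc_lomin_expansion D"
    and "def_top_group D n G \<tau>"
    and "normal H G" and "H \<in> D n"
    and "is_def_quotient D n G \<tau> H k \<tau>Q \<pi>"
    and "def_compact D n (subtopology \<tau> H)"
    and "def_compact D k \<tau>Q"
  shows "def_compact D n \<tau>"
proof -
  obtain mB TB B where b: "def_family D mB n TB B" "\<forall>t\<in>TB. openin \<tau> (B t)"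
    "\<forall>U. openin \<tau> U \<longrightarrow> (\<forall>x\<in>U. \<exists>t\<in>TB. x \<in> B t \<and> B t \<subseteq> U)"
    using assms(2) unfolding def_top_group_def def_top_space_def by blast
  obtain e :: 'a where e: "e < 0" using assms(1) unfolding dc_lomin_expansion_def by blast
  have "S5 D G \<tau> H \<tau>Q \<pi> n k mB TB B e"
    by (intro S5.intro assms b) (use e in simp)
  then show ?thesis by (rule S5.main)
qed


end
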